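(* Let $\varphi\colon A\to\mathcal{B}(X)$ be a representation (bounded linear multiplicative map) of a Banach algebra $A$ on a Banach space $X$, and set $\tilde{\varphi}=\alpha_X\circ\varphi^{**}\colon A^{**}\to\mathcal{B}(X,X^{**})$. Then the image of $\tilde{\varphi}$ is contained in $\gamma_X(\mathcal{B}(X))$ if and only if for every $x\in X$ the orbit map $\mathrm{ev}_x\circ\varphi\colon A\to X$, $a\mapsto \varphi(a)x$, is weakly compact. Moreover, if this is the case, then, regarding $\tilde{\varphi}$ as a map $A^{**}\to\mathcal{B}(X)$: (1) the essential spaces of $\varphi$ and $\tilde{\varphi}$ agree; (2) $\tilde{\varphi}$ is multiplicative with respect to both the left and the right Arens product on $A^{**}$; (3) $\tilde{\varphi}\circ\kappa_A=\varphi$.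
   Context: For a Banach space $E$, $\kappa_E\colon E\to E^{**}$ is the canonical embedding. The left Arens product $\square$ and right Arens product $\diamond$ on $A^{**}$ are defined by $S\square T=\text{weak*-}\lim_i\text{weak*-}\lim_j\kappa_A(a_ib_j)$ and $S\diamond T=\text{weak*-}\lim_j\text{weak*-}\lim_i\kappa_A(a_ib_j)$ for bounded nets $(a_i),(b_j)$ in $A$ with $\kappa_A(a_i)\to S$, $\kappa_A(b_j)\to T$ weak*. $\mathcal{B}(X,X^{**})$ is a unital Banach algebra with product $ab=\kappa_{X^*}^*\circ a^{**}\circ b$. $\gamma_X\colon\mathcal{B}(X)\to\mathcal{B}(X,X^{**})$ is $\gamma_X(a)=\kappa_X\circ a$, an isometric multiplicative map, through which $\mathcal{B}(X)$ is regarded as a subalgebra of $\mathcal{B}(X,X^{**})$. For $x\in X$, $\mathrm{ev}_x\colon\mathcal{B}(X)\to X$ is $\mathrm{ev}_x(a)=a(x)$, and $\alpha_X\colon\mathcal{B}(X)^{**}\to\mathcal{B}(X,X^{**})$ is defined by $\alpha_X(S)(x)=\mathrm{ev}_x^{**}(S)$. The essential space of a representation $\psi$ of an algebra $B$ on $X$ is the closed linear span $X_\psi$ of $\{\psi(b)x: b\in B, x\in X\}$. *)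

theory Defs
  imports "HOL-Analysis.Analysis"
begin

type_synonym 'e bidual = "('e \<Rightarrow>\<^sub>L real) \<Rightarrow>\<^sub>L real"

definition kappa :: "'e::real_normed_vector \<Rightarrow> 'e bidual" where
  "kappa x = Blinfun (\<lambda>f. blinfun_apply f x)"

definition adj :: "('e::real_normed_vector \<Rightarrow>\<^sub>L 'f::real_normed_vector)
    \<Rightarrow> ('f \<Rightarrow>\<^sub>L real) \<Rightarrow>\<^sub>L ('e \<Rightarrow>\<^sub>L real)" where
  "adj T = Blinfun (\<lambda>g. g o\<^sub>L T)"

definition biadj :: "('e::real_normed_vector \<Rightarrow>\<^sub>L 'f::real_normed_vector)
    \<Rightarrow> 'e bidual \<Rightarrow>\<^sub>L 'f bidual" where
  "biadj T = adj (adj T)"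

definition ev :: "'x::real_normed_vector \<Rightarrow> ('x \<Rightarrow>\<^sub>L 'x) \<Rightarrow>\<^sub>L 'x" where
  "ev x = Blinfun (\<lambda>a. blinfun_apply a x)"

definition alpha :: "('x::real_normed_vector \<Rightarrow>\<^sub>L 'x) bidual \<Rightarrow> 'x \<Rightarrow> 'x bidual" where
  "alpha S = (\<lambda>x. blinfun_apply (biadj (ev x)) S)"

definition gamma :: "('x::real_normed_vector \<Rightarrow>\<^sub>L 'x) \<Rightarrow> 'x \<Rightarrow> 'x bidual" where
  "gamma a = (\<lambda>x. kappa (blinfun_apply a x))"

definition phitilde :: "('a::real_normed_vector \<Rightarrow>\<^sub>L ('x::real_normed_vector \<Rightarrow>\<^sub>L 'x))
    \<Rightarrow> 'a bidual \<Rightarrow> 'x \<Rightarrow> 'x bidual" where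
  "phitilde \<phi> S = alpha (blinfun_apply (biadj \<phi>) S)"

text \<open>phi tilde regarded as a map into B(X) (meaningful when its image lies in gamma_X(B(X))).\<close>
definition phihat :: "('a::real_normed_vector \<Rightarrow>\<^sub>L ('x::real_normed_vector \<Rightarrow>\<^sub>L 'x))
    \<Rightarrow> 'a bidual \<Rightarrow> ('x \<Rightarrow>\<^sub>L 'x)" where
  "phihat \<phi> S = (THE a. phitilde \<phi> S = gamma a)"

definition weak_top :: "'f::real_normed_vector topology" where
  "weak_top = topology_generated_by
     {blinfun_apply f -` U | f U. open (U :: real set)}"

definition wstar_top :: "'e::real_normed_vector bidual topology" where
  "wstar_top = topology_generated_by
     {{\<Phi>. blinfun_apply \<Phi> f \<in> U} | f U. open (U :: real set)}"

definition weakly_compact :: "('e::real_normed_vector \<Rightarrow>\<^sub>L 'f::real_normed_vector) \<Rightarrow> bool" where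
  "weakly_compact T \<longleftrightarrow>
     compactin weak_top (weak_top closure_of (blinfun_apply T ` cball 0 1))"

text \<open>Nets in A are represented by (the image filters on A of) nets; a bounded net
  (a_i) with kappa(a_i) \<rightarrow> S weak*.\<close>
definition bnd_net :: "'a::real_normed_vector filter \<Rightarrow> 'a bidual \<Rightarrow> bool" where
  "bnd_net F S \<longleftrightarrow> F \<noteq> bot \<and> (\<exists>B. bounded B \<and> eventually (\<lambda>a. a \<in> B) F)
     \<and> limitin wstar_top kappa S F"

definition wlim :: "'b filter \<Rightarrow> ('b \<Rightarrow> 'e::real_normed_vector bidual) \<Rightarrow> 'e bidual" where
  "wlim F h = (THE R. limitin wstar_top h R F)"

definition arens_left :: "'a::real_normed_algebra bidual \<Rightarrow> 'a bidual \<Rightarrow> 'a bidual" where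
  "arens_left S T = (THE R. \<forall>F G. bnd_net F S \<and> bnd_net G T \<longrightarrow>
      limitin wstar_top (\<lambda>a. wlim G (\<lambda>b. kappa (a * b))) R F)"

definition arens_right :: "'a::real_normed_algebra bidual \<Rightarrow> 'a bidual \<Rightarrow> 'a bidual" where
  "arens_right S T = (THE R. \<forall>F G. bnd_net F S \<and> bnd_net G T \<longrightarrow>
      limitin wstar_top (\<lambda>b. wlim F (\<lambda>a. kappa (a * b))) R G)"

definition ess_space :: "('b \<Rightarrow> ('x::real_normed_vector \<Rightarrow>\<^sub>L 'x)) \<Rightarrow> 'x set" where
  "ess_space \<psi> = closure (span {blinfun_apply (\<psi> b) x | b x. True})"

end

theory Submission
  imports Defs
begin

lemma blinfun_compose_assoc: "(a o\<^sub>L b) o\<^sub>L c = a o\<^sub>L (b o\<^sub>L c)"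
  by (rule blinfun_eqI) simp

lemma kappa_apply[simp]: "blinfun_apply (kappa x) f = blinfun_apply f x"
  unfolding kappa_def by (simp add: bounded_linear_Blinfun_apply)
lemma adj_apply[simp]: "blinfun_apply (adj T) g = g o\<^sub>L T"
  unfolding adj_def
  by (simp add: bounded_linear_Blinfun_apply bounded_bilinear.bounded_linear_left[OF bounded_bilinear_blinfun_compose])
lemma biadj_apply[simp]: "blinfun_apply (blinfun_apply (biadj T) S) g = blinfun_apply S (g o\<^sub>L T)"
  unfolding biadj_def by simp
lemma ev_apply[simp]: "blinfun_apply (ev x) a = blinfun_apply a x"
  unfolding ev_def by (simp add: bounded_linear_Blinfun_apply)
lemma phitilde_eq: "phitilde \<phi> S x = blinfun_apply (biadj (ev x o\<^sub>L \<phi>)) S"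
  unfolding phitilde_def alpha_def by (rule blinfun_eqI) (simp add: blinfun_compose_assoc)


definition init_top :: "('a \<Rightarrow> real) set \<Rightarrow> 'a topology" where
  "init_top H = topology_generated_by {h -` U | h U. h \<in> H \<and> open U}"

lemma init_top_topspace[simp]: "H \<noteq> {} \<Longrightarrow> topspace (init_top H) = UNIV"
  unfolding init_top_def by auto

lemma init_top_basic: "h \<in> H \<Longrightarrow> open U \<Longrightarrow> openin (init_top H) (h -` U)"
  unfolding init_top_def by (rule topology_generated_by_Basis) auto

lemma init_top_cont: "h \<in> H \<Longrightarrow> continuous_map (init_top H) euclideanreal h"
proof -
  assume h: "h \<in> H"
  then have ts: "topspace (init_top H) = UNIV" by (intro init_top_topspace) auto
  show ?thesis unfolding continuous_map_def using init_top_basic[OF h] by (simp add: ts vimage_def)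
qed

lemma init_top_cont_into:
  assumes "H \<noteq> {}" "\<And>h. h \<in> H \<Longrightarrow> continuous_map X euclideanreal (\<lambda>x. h (g x))"
  shows "continuous_map X (init_top H) g"
  unfolding init_top_def
proof (rule continuous_on_generated_topo)
  fix V assume "V \<in> {h -` U | h U. h \<in> H \<and> open U}"
  then obtain h U where "V = h -` U" "h \<in> H" "open U" by auto
  then have "openin X {x \<in> topspace X. h (g x) \<in> U}"
    using assms(2) openin_continuous_map_preimage by (metis open_openin)
  moreover have "g -` V \<inter> topspace X = {x \<in> topspace X. h (g x) \<in> U}" using \<open>V = _\<close> by auto
  ultimately show "openin X (g -` V \<inter> topspace X)" by simp
next
  show "g ` topspace X \<subseteq> \<Union> {h -` U | h U. h \<in> H \<and> open U}"
  proof -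
    obtain h0 where "h0 \<in> H" using assms(1) by blast
    then have mem: "h0 -` UNIV \<in> {h -` U |h U. h \<in> H \<and> open U}"
      unfolding mem_Collect_eq by (intro exI[of _ h0] exI[of _ UNIV]) simp
    show ?thesis
    proof
      fix y show "y \<in> \<Union> {h -` U |h U. h \<in> H \<and> open U}" using UnionI[OF mem, of y] by simp
    qed
  qed
qed

lemma init_top_open_nbhd:
  assumes "openin (init_top H) W" "l \<in> W"
  shows "\<exists>Fs e. finite Fs \<and> Fs \<subseteq> H \<and> e > 0 \<and> {z. \<forall>h\<in>Fs. \<bar>h z - h l\<bar> < e} \<subseteq> W"
proof -
  have "generate_topology_on {h -` U | h U. h \<in> H \<and> open U} W"
    using assms(1) unfolding init_top_def by (rule openin_topology_generated_by)
  then show ?thesis using assms(2)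
  proof (induction arbitrary: l)
    case Empty then show ?case by simp
  next
    case (Int a b)
    from Int.prems have la: "l \<in> a" and lb: "l \<in> b" by auto
    obtain F1 e1 where 1: "finite F1" "F1 \<subseteq> H" "e1 > 0" "{z. \<forall>h\<in>F1. \<bar>h z - h l\<bar> < e1} \<subseteq> a"
      using Int.IH(1)[OF la] by blast
    obtain F2 e2 where 2: "finite F2" "F2 \<subseteq> H" "e2 > 0" "{z. \<forall>h\<in>F2. \<bar>h z - h l\<bar> < e2} \<subseteq> b"
      using Int.IH(2)[OF lb] by blast
    have "{z. \<forall>h\<in>F1 \<union> F2. \<bar>h z - h l\<bar> < min e1 e2} \<subseteq> a \<inter> b"
    proof
      fix z assume z: "z \<in> {z. \<forall>h\<in>F1 \<union> F2. \<bar>h z - h l\<bar> < min e1 e2}"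
      have "z \<in> a" using 1(4) z by auto
      moreover have "z \<in> b" using 2(4) z by auto
      ultimately show "z \<in> a \<inter> b" by simp
    qed
    moreover have "finite (F1 \<union> F2)" "F1 \<union> F2 \<subseteq> H" "min e1 e2 > 0" using 1 2 by auto
    ultimately show ?case by blast
  next
    case (UN K)
    then obtain k where "k \<in> K" "l \<in> k" by auto
    with UN.IH[of k l] show ?case by blast
  next
    case (Basis s)
    then obtain h U where s: "s = h -` U" "h \<in> H" "open U" by auto
    then obtain e where "e > 0" "ball (h l) e \<subseteq> U"
      using Basis.prems by (metis open_contains_ball vimage_eq)
    then show ?case
      apply (intro exI[of _ "{h}"] exI[of _ e])
      using s by (auto simp: dist_real_def abs_minus_commute subset_iff mem_ball)
  qed
qed

lemma init_top_limitin:
  assumes "H \<noteq> {}"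
  shows "limitin (init_top H) g l F \<longleftrightarrow> (\<forall>h\<in>H. ((\<lambda>x. h (g x)) \<longlongrightarrow> h l) F)"
proof
  assume L: "limitin (init_top H) g l F"
  show "\<forall>h\<in>H. ((\<lambda>x. h (g x)) \<longlongrightarrow> h l) F"
  proof (intro ballI tendstoI)
    fix h e assume h: "h \<in> H" and e: "(e::real) > 0"
    have "openin (init_top H) (h -` ball (h l) e)" by (rule init_top_basic[OF h]) simp
    from limitinD[OF L this] e show "\<forall>\<^sub>F x in F. dist (h (g x)) (h l) < e"
      by (simp add: dist_commute)
  qed
next
  assume R: "\<forall>h\<in>H. ((\<lambda>x. h (g x)) \<longlongrightarrow> h l) F"
  show "limitin (init_top H) g l F"
    unfolding limitin_def
  proof (intro conjI allI impI)
    show "l \<in> topspace (init_top H)" using assms by simp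
    fix W assume W: "openin (init_top H) W \<and> l \<in> W"
    then obtain Fs e where Fs: "finite Fs" "Fs \<subseteq> H" "e > 0" "{z. \<forall>h\<in>Fs. \<bar>h z - h l\<bar> < e} \<subseteq> W"
      using init_top_open_nbhd[of H W l] by blast
    have "\<forall>\<^sub>F x in F. \<forall>h\<in>Fs. \<bar>h (g x) - h l\<bar> < e"
      using Fs(1,2)
    proof (induction Fs rule: finite_induct)
      case empty then show ?case by simp
    next
      case (insert h Fs)
      then have "((\<lambda>x. h (g x)) \<longlongrightarrow> h l) F" using R by auto
      then have "\<forall>\<^sub>F x in F. dist (h (g x)) (h l) < e" using \<open>e > 0\<close> by (rule tendstoD)
      with insert show ?case by (auto elim: eventually_elim2 simp: dist_real_def)
    qed
    then show "\<forall>\<^sub>F x in F. g x \<in> W" by (rule eventually_mono) (use Fs(4) in blast)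
  qed
qed

lemma init_top_Hausdorff:
  assumes "H \<noteq> {}" "\<And>x y. x \<noteq> y \<Longrightarrow> \<exists>h\<in>H. h x \<noteq> h y"
  shows "Hausdorff_space (init_top H)"
  unfolding Hausdorff_space_def
proof (intro allI impI)
  fix x y assume "x \<in> topspace (init_top H) \<and> y \<in> topspace (init_top H) \<and> x \<noteq> y"
  then obtain h where h: "h \<in> H" "h x \<noteq> h y" using assms(2) by blast
  define e where "e = \<bar>h x - h y\<bar> / 2"
  have e: "e > 0" using h by (simp add: e_def)
  show "\<exists>U V. openin (init_top H) U \<and> openin (init_top H) V \<and> x \<in> U \<and> y \<in> V \<and> disjnt U V"
    apply (rule exI[of _ "h -` ball (h x) e"], rule exI[of _ "h -` ball (h y) e"])
    using e h apply (auto simp: init_top_basic disjnt_def dist_real_def e_def)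
    by (smt (verit))
qed

lemma weak_top_eq: "weak_top = init_top (range blinfun_apply)"
  unfolding weak_top_def init_top_def by (rule arg_cong[where f=topology_generated_by]) auto

lemma wstar_top_eq: "wstar_top = init_top (range (\<lambda>f \<Phi>. blinfun_apply \<Phi> f))"
  unfolding wstar_top_def init_top_def apply (rule arg_cong[where f=topology_generated_by])
  apply auto
  subgoal for f U by (rule exI[of _ "\<lambda>\<Phi>. blinfun_apply \<Phi> f"]) auto
  done



definition hb_good :: "('x::real_vector \<Rightarrow> real) \<Rightarrow> ('x \<times> real) set \<Rightarrow> ('x \<times> real) set \<Rightarrow> bool" where
 "hb_good p G0 G \<longleftrightarrow> G0 \<subseteq> G \<and> (0,0) \<in> G \<and>
    (\<forall>x a b. (x,a)\<in>G \<longrightarrow> (x,b)\<in>G \<longrightarrow> a = b) \<and>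
    (\<forall>x a y b. (x,a)\<in>G \<longrightarrow> (y,b)\<in>G \<longrightarrow> (x+y, a+b)\<in>G) \<and>
    (\<forall>x a t. (x,a)\<in>G \<longrightarrow> (t *\<^sub>R x, t*a)\<in>G) \<and>
    (\<forall>x a. (x,a)\<in>G \<longrightarrow> a \<le> p x)"

lemma hb_chain:
  assumes C: "C \<in> chains {G. hb_good p G0 G}" and ne: "C \<noteq> {}"
  shows "hb_good p G0 (\<Union>C)"
proof -
  have good: "\<And>G. G \<in> C \<Longrightarrow> hb_good p G0 G" using chainsD2[OF C] by blast
  have two: "\<And>u v. u \<in> \<Union>C \<Longrightarrow> v \<in> \<Union>C \<Longrightarrow> \<exists>G\<in>C. u \<in> G \<and> v \<in> G"
  proof -
    fix u v assume "u \<in> \<Union>C" "v \<in> \<Union>C"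
    then obtain G1 G2 where "G1 \<in> C" "G2 \<in> C" "u \<in> G1" "v \<in> G2" by blast
    then show "\<exists>G\<in>C. u \<in> G \<and> v \<in> G" using chainsD[OF C \<open>G1 \<in> C\<close> \<open>G2 \<in> C\<close>] by blast
  qed
  obtain G where G: "G \<in> C" using ne by blast
  show ?thesis unfolding hb_good_def
  proof (intro conjI allI impI)
    show "G0 \<subseteq> \<Union>C" using good[OF G] G unfolding hb_good_def by blast
    show "(0,0) \<in> \<Union>C" using good[OF G] G unfolding hb_good_def by blast
  next
    fix x a b assume "(x,a) \<in> \<Union>C" "(x,b) \<in> \<Union>C"
    then obtain G where "G \<in> C" "(x,a)\<in>G" "(x,b)\<in>G" using two by blast
    then show "a = b" using good unfolding hb_good_def by blast
  next
    fix x a y b assume "(x,a) \<in> \<Union>C" "(y,b) \<in> \<Union>C"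
    then obtain G where "G \<in> C" "(x,a)\<in>G" "(y,b)\<in>G" using two by blast
    then have "(x+y, a+b) \<in> G" using good unfolding hb_good_def by blast
    then show "(x+y, a+b) \<in> \<Union>C" using \<open>G \<in> C\<close> by blast
  next
    fix x a t assume "(x,a) \<in> \<Union>C"
    then obtain G where "G \<in> C" "(x,a)\<in>G" by blast
    then have "(t *\<^sub>R x, t*a) \<in> G" using good unfolding hb_good_def by blast
    then show "(t *\<^sub>R x, t*a) \<in> \<Union>C" using \<open>G \<in> C\<close> by blast
  next
    fix x a assume "(x,a) \<in> \<Union>C"
    then obtain G where "G \<in> C" "(x,a)\<in>G" by blast
    then show "a \<le> p x" using good unfolding hb_good_def by blast
  qed
qed

lemma hb_extend:
  assumes sub: "\<And>x y. p (x + y) \<le> p x + p y"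
    and hom: "\<And>t x. t > 0 \<Longrightarrow> p (t *\<^sub>R x) = t * p x"
    and good: "hb_good p G0 M"
    and x0: "\<And>a. (x0, a) \<notin> M"
  shows "\<exists>M'. hb_good p G0 M' \<and> M \<subseteq> M' \<and> M' \<noteq> M"
proof -
  have M0: "(0,0) \<in> M" and Mf: "\<And>x a b. (x,a)\<in>M \<Longrightarrow> (x,b)\<in>M \<Longrightarrow> a = b"
    and Ma: "\<And>x a y b. (x,a)\<in>M \<Longrightarrow> (y,b)\<in>M \<Longrightarrow> (x+y, a+b)\<in>M"
    and Ms: "\<And>x a t. (x,a)\<in>M \<Longrightarrow> (t *\<^sub>R x, t*a)\<in>M"
    and Mp: "\<And>x a. (x,a)\<in>M \<Longrightarrow> a \<le> p x" and MG0: "G0 \<subseteq> M"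
    using good unfolding hb_good_def by blast+
  have key: "b - p (y - x0) \<le> p (x + x0) - a" if "(x,a)\<in>M" "(y,b)\<in>M" for x a y b
  proof -
    have "a + b \<le> p (x + y)" using Mp[OF Ma[OF that]] .
    also have "x + y = (x + x0) + (y - x0)" by simp
    also have "p \<dots> \<le> p (x + x0) + p (y - x0)" by (rule sub)
    finally show ?thesis by simp
  qed
  define L where "L = {b - p (y - x0) | y b. (y,b)\<in>M}"
  define c where "c = Sup L"
  have Lne: "L \<noteq> {}" using M0 unfolding L_def by blast
  have Lbdd: "bdd_above L" unfolding L_def bdd_above_def using key[OF M0] by auto
  have c_ge: "b - p (y - x0) \<le> c" if "(y,b)\<in>M" for y b
    unfolding c_def by (rule cSup_upper[OF _ Lbdd]) (use that L_def in blast)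
  have c_le: "c \<le> p (x + x0) - a" if "(x,a)\<in>M" for x a
    unfolding c_def by (rule cSup_least[OF Lne]) (use that key L_def in blast)
  define M' where "M' = {(x + t *\<^sub>R x0, a + t*c) | x a t. (x,a)\<in>M}"
  have MM': "M \<subseteq> M'"
  proof
    fix u assume "u \<in> M"
    then obtain x a where "u = (x,a)" "(x,a) \<in> M" by (cases u) auto
    then show "u \<in> M'" unfolding M'_def by (intro CollectI exI[of _ x] exI[of _ a] exI[of _ 0]) simp
  qed
  have "(x0, c) \<in> M'" unfolding M'_def using M0 by (intro CollectI exI[of _ 0] exI[of _ 0] exI[of _ 1]) simp
  then have neq: "M' \<noteq> M" using x0 by blast
  have uniq: "t = s" if "(x,a)\<in>M" "(y,b)\<in>M" "x + t *\<^sub>R x0 = y + s *\<^sub>R x0" for x a y b t s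
  proof (rule ccontr)
    assume ts: "t \<noteq> s"
    have d: "(y - x, b - a) \<in> M" using Ma[OF that(2) Ms[OF that(1), of "-1"]] by simp
    have "((1/(t-s)) *\<^sub>R (y - x), (1/(t-s)) * (b - a)) \<in> M" by (rule Ms[OF d])
    moreover have "y - x = (t - s) *\<^sub>R x0" using that(3) by (simp add: algebra_simps)
    ultimately have "(x0, (1/(t-s)) * (b - a)) \<in> M" using ts by simp
    then show False using x0 by blast
  qed
  have "hb_good p G0 M'" unfolding hb_good_def
  proof (intro conjI allI impI)
    show "G0 \<subseteq> M'" using MG0 MM' by blast
    show "(0,0) \<in> M'" using MM' M0 by blast
  next
    fix x a b assume A: "(x,a) \<in> M'" "(x,b) \<in> M'"
    then obtain x1 a1 t1 x2 a2 t2 where E: "(x1,a1)\<in>M" "(x2,a2)\<in>M" "x = x1 + t1 *\<^sub>R x0" "a = a1 + t1 * c"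
      "x = x2 + t2 *\<^sub>R x0" "b = a2 + t2 * c" unfolding M'_def by blast
    have "t1 = t2" using uniq[OF E(1,2)] E(3,5) by simp
    then have "x1 = x2" using E(3,5) by simp
    then have "a1 = a2" using Mf E(1,2) by blast
    then show "a = b" using E \<open>t1 = t2\<close> by simp
  next
    fix x a y b assume A: "(x,a) \<in> M'" "(y,b) \<in> M'"
    then obtain x1 a1 t1 x2 a2 t2 where E: "(x1,a1)\<in>M" "(x2,a2)\<in>M" "x = x1 + t1 *\<^sub>R x0" "a = a1 + t1 * c"
      "y = x2 + t2 *\<^sub>R x0" "b = a2 + t2 * c" unfolding M'_def by blast
    have "(x1 + x2, a1 + a2) \<in> M" using Ma E(1,2) by blast
    moreover have "x + y = (x1 + x2) + (t1 + t2) *\<^sub>R x0" "a + b = (a1 + a2) + (t1 + t2) * c"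
      using E by (simp_all add: algebra_simps)
    ultimately show "(x + y, a + b) \<in> M'" unfolding M'_def by blast
  next
    fix x a r assume A: "(x,a) \<in> M'"
    then obtain x1 a1 t1 where E: "(x1,a1)\<in>M" "x = x1 + t1 *\<^sub>R x0" "a = a1 + t1 * c"
      unfolding M'_def by blast
    have "(r *\<^sub>R x1, r * a1) \<in> M" using Ms E(1) by blast
    moreover have "r *\<^sub>R x = r *\<^sub>R x1 + (r * t1) *\<^sub>R x0" "r * a = r * a1 + (r * t1) * c"
      using E by (simp_all add: algebra_simps)
    ultimately show "(r *\<^sub>R x, r * a) \<in> M'" unfolding M'_def by blast
  next
    fix x a assume A: "(x,a) \<in> M'"
    then obtain x1 a1 t where E: "(x1,a1)\<in>M" "x = x1 + t *\<^sub>R x0" "a = a1 + t * c"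
      unfolding M'_def by blast
    consider "t = 0" | "t > 0" | "t < 0" by linarith
    then show "a \<le> p x"
    proof cases
      case 1 then show ?thesis using Mp E by simp
    next
      case 2
      have "((1/t) *\<^sub>R x1, (1/t) * a1) \<in> M" using Ms E(1) by blast
      then have "c \<le> p ((1/t) *\<^sub>R x1 + x0) - (1/t) * a1" by (rule c_le)
      then have "t * c \<le> t * (p ((1/t) *\<^sub>R x1 + x0) - (1/t) * a1)" using 2 by (intro mult_left_mono) auto
      also have "\<dots> = t * p ((1/t) *\<^sub>R x1 + x0) - a1" using 2 by (simp add: right_diff_distrib)
      also have "t * p ((1/t) *\<^sub>R x1 + x0) = p (t *\<^sub>R ((1/t) *\<^sub>R x1 + x0))" using hom 2 by simp
      also have "t *\<^sub>R ((1/t) *\<^sub>R x1 + x0) = x" using 2 E(2) by (simp add: scaleR_add_right)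
      finally show ?thesis using E(3) by simp
    next
      case 3
      define s where "s = - t"
      have s: "s > 0" using 3 s_def by simp
      have "((1/s) *\<^sub>R x1, (1/s) * a1) \<in> M" using Ms E(1) by blast
      then have "(1/s) * a1 - p ((1/s) *\<^sub>R x1 - x0) \<le> c" by (rule c_ge)
      then have "s * ((1/s) * a1 - p ((1/s) *\<^sub>R x1 - x0)) \<le> s * c" using s by (simp add: mult_left_mono)
      then have "a1 - s * p ((1/s) *\<^sub>R x1 - x0) \<le> s * c" using s by (simp add: right_diff_distrib)
      also have "s * p ((1/s) *\<^sub>R x1 - x0) = p (s *\<^sub>R ((1/s) *\<^sub>R x1 - x0))" using hom s by simp
      also have "s *\<^sub>R ((1/s) *\<^sub>R x1 - x0) = x" using s E(2) s_def by (simp add: scaleR_diff_right)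
      finally show ?thesis using E(3) s_def by simp
    qed
  qed
  then show ?thesis using MM' neq by blast
qed

lemma hb_graph:
  assumes sub: "\<And>x y. p (x + y) \<le> p x + p y"
    and hom: "\<And>t x. t > 0 \<Longrightarrow> p (t *\<^sub>R x) = t * p x"
    and good: "hb_good p G0 G0"
  shows "\<exists>h. linear h \<and> (\<forall>x a. (x,a)\<in>G0 \<longrightarrow> h x = a) \<and> (\<forall>x. h x \<le> p x)"
proof -
  have "\<forall>C\<in>chains {G. hb_good p G0 G}. \<exists>U\<in>{G. hb_good p G0 G}. \<forall>X\<in>C. X \<subseteq> U"
  proof
    fix C assume C: "C \<in> chains {G. hb_good p G0 G}"
    show "\<exists>U\<in>{G. hb_good p G0 G}. \<forall>X\<in>C. X \<subseteq> U"
    proof (cases "C = {}")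
      case True then show ?thesis using good by blast
    next
      case False then show ?thesis using hb_chain[OF C False] by blast
    qed
  qed
  from Zorn_Lemma2[OF this] obtain M where M: "hb_good p G0 M"
    and max: "\<And>X. hb_good p G0 X \<Longrightarrow> M \<subseteq> X \<Longrightarrow> X = M" by blast
  have tot: "\<exists>a. (x,a) \<in> M" for x
  proof (rule ccontr)
    assume "\<not> (\<exists>a. (x,a) \<in> M)"
    then obtain M' where "hb_good p G0 M'" "M \<subseteq> M'" "M' \<noteq> M" using hb_extend[OF sub hom M] by blast
    then show False using max by blast
  qed
  have Mf: "\<And>x a b. (x,a)\<in>M \<Longrightarrow> (x,b)\<in>M \<Longrightarrow> a = b"
    and Ma: "\<And>x a y b. (x,a)\<in>M \<Longrightarrow> (y,b)\<in>M \<Longrightarrow> (x+y, a+b)\<in>M"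
    and Ms: "\<And>x a t. (x,a)\<in>M \<Longrightarrow> (t *\<^sub>R x, t*a)\<in>M"
    and Mp: "\<And>x a. (x,a)\<in>M \<Longrightarrow> a \<le> p x" and MG0: "G0 \<subseteq> M"
    using M unfolding hb_good_def by blast+
  define h where "h x = (THE a. (x,a) \<in> M)" for x
  have hM: "(x, h x) \<in> M" for x
  proof -
    obtain a where "(x,a) \<in> M" using tot by blast
    then show ?thesis unfolding h_def by (rule theI[where a=a]) (use \<open>(x,a)\<in>M\<close> Mf in blast)+
  qed
  have hval: "(x,a) \<in> M \<Longrightarrow> h x = a" for x a using hM Mf by blast
  have "linear h"
  proof (rule linearI)
    fix x y show "h (x + y) = h x + h y" using hval[OF Ma[OF hM hM]] .
  next
    fix r x show "h (r *\<^sub>R x) = r *\<^sub>R h x" using hval[OF Ms[OF hM]] by simp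
  qed
  moreover have "\<forall>x a. (x,a)\<in>G0 \<longrightarrow> h x = a" using hval MG0 by blast
  moreover have "\<forall>x. h x \<le> p x" using Mp hM by blast
  ultimately show ?thesis by blast
qed

lemma infdist_ge: "A \<noteq> {} \<Longrightarrow> (\<And>a. a \<in> A \<Longrightarrow> c \<le> dist x a) \<Longrightarrow> c \<le> infdist x A"
  by (simp add: infdist_def cINF_greatest)

lemma infdist_sub_add:
  fixes M :: "'x::real_normed_vector set"
  assumes "subspace M"
  shows "infdist (x + z) M \<le> infdist x M + infdist z M"
proof -
  have ne: "M \<noteq> {}" using subspace_0[OF assms] by blast
  have "infdist (x + z) M - infdist z M \<le> dist x m1" if m1: "m1 \<in> M" for m1
  proof -
    have "infdist (x + z) M - dist x m1 \<le> infdist z M"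
    proof (rule infdist_ge[OF ne])
      fix m2 assume m2: "m2 \<in> M"
      have "infdist (x + z) M \<le> dist (x + z) (m1 + m2)"
        using infdist_le subspace_add[OF assms m1 m2] by blast
      also have "\<dots> \<le> dist x m1 + dist z m2"
        by (simp add: dist_norm) (metis add_diff_add norm_triangle_ineq)
      finally show "infdist (x + z) M - dist x m1 \<le> dist z m2" by simp
    qed
    then show ?thesis by simp
  qed
  then have "infdist (x + z) M - infdist z M \<le> infdist x M" by (intro infdist_ge[OF ne])
  then show ?thesis by simp
qed

lemma infdist_sub_le_scale:
  fixes M :: "'x::real_normed_vector set"
  assumes "subspace M" "t > 0"
  shows "infdist (t *\<^sub>R x) M \<le> t * infdist x M"
proof -
  have ne: "M \<noteq> {}" using subspace_0[OF assms(1)] by blast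
  have "infdist (t *\<^sub>R x) M / t \<le> infdist x M"
  proof (rule infdist_ge[OF ne])
    fix m assume m: "m \<in> M"
    have "infdist (t *\<^sub>R x) M \<le> dist (t *\<^sub>R x) (t *\<^sub>R m)"
      using infdist_le subspace_scale[OF assms(1) m] by blast
    also have "\<dots> = t * dist x m" using assms(2)
      by (simp add: dist_norm scaleR_diff_right[symmetric])
    finally show "infdist (t *\<^sub>R x) M / t \<le> dist x m" using assms(2) by (simp add: divide_le_eq mult.commute)
  qed
  then show ?thesis using assms(2) by (simp add: divide_le_eq mult.commute)
qed

lemma infdist_sub_scale:
  fixes M :: "'x::real_normed_vector set"
  assumes "subspace M" "t > 0"
  shows "infdist (t *\<^sub>R x) M = t * infdist x M"
proof (rule antisym)
  show "infdist (t *\<^sub>R x) M \<le> t * infdist x M" by (rule infdist_sub_le_scale[OF assms])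
  have "infdist ((1/t) *\<^sub>R (t *\<^sub>R x)) M \<le> (1/t) * infdist (t *\<^sub>R x) M"
    by (rule infdist_sub_le_scale[OF assms(1)]) (use assms(2) in simp)
  then show "t * infdist x M \<le> infdist (t *\<^sub>R x) M" using assms(2) by (simp add: field_simps)
qed

lemma hb_sub:
  fixes M :: "'x::real_normed_vector set"
  assumes M: "subspace M"
  shows "\<exists>f::'x \<Rightarrow>\<^sub>L real. norm f \<le> 1 \<and> (\<forall>m\<in>M. blinfun_apply f m = 0) \<and> blinfun_apply f y = infdist y M"
proof (cases "y \<in> M")
  case True then show ?thesis by (intro exI[of _ 0]) simp
next
  case False
  define p where "p x = infdist x M" for x
  define \<delta> where "\<delta> = infdist y M"
  define G0 where "G0 = {(m + t *\<^sub>R y, t * \<delta>) | m t. m \<in> M}"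
  have sub: "p (x + z) \<le> p x + p z" for x z unfolding p_def by (rule infdist_sub_add[OF M])
  have hom: "t > 0 \<Longrightarrow> p (t *\<^sub>R x) = t * p x" for t x unfolding p_def by (rule infdist_sub_scale[OF M])
  have uniq: "t = s" if "m \<in> M" "m' \<in> M" "m + t *\<^sub>R y = m' + s *\<^sub>R y" for m m' t s
  proof (rule ccontr)
    assume ts: "t \<noteq> s"
    have eq: "(t - s) *\<^sub>R y = m' - m" using that(3) by (simp add: algebra_simps)
    have "y = (1/(t-s)) *\<^sub>R ((t - s) *\<^sub>R y)" using ts by simp
    also have "\<dots> = (1/(t-s)) *\<^sub>R (m' - m)" by (simp only: eq)
    finally have "y = (1/(t-s)) *\<^sub>R (m' - m)" .
    moreover have "(1/(t-s)) *\<^sub>R (m' - m) \<in> M" using M that(1,2) by (simp add: subspace_scale subspace_diff)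
    ultimately show False using False by simp
  qed
  have "hb_good p G0 G0" unfolding hb_good_def
  proof (intro conjI allI impI)
    show "G0 \<subseteq> G0" by simp
    show "(0,0) \<in> G0" unfolding G0_def using subspace_0[OF M] by (intro CollectI exI[of _ 0] exI[of _ 0]) simp
  next
    fix x a b assume "(x,a) \<in> G0" "(x,b) \<in> G0"
    then obtain m t m' s where E: "m \<in> M" "m' \<in> M" "x = m + t *\<^sub>R y" "a = t * \<delta>" "x = m' + s *\<^sub>R y" "b = s * \<delta>"
      unfolding G0_def by blast
    then show "a = b" using uniq[OF E(1,2)] by simp
  next
    fix x a z b assume "(x,a) \<in> G0" "(z,b) \<in> G0"
    then obtain m t m' s where E: "m \<in> M" "m' \<in> M" "x = m + t *\<^sub>R y" "a = t * \<delta>" "z = m' + s *\<^sub>R y" "b = s * \<delta>"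
      unfolding G0_def by blast
    have "m + m' \<in> M" using M E by (simp add: subspace_add)
    moreover have "x + z = (m + m') + (t + s) *\<^sub>R y" "a + b = (t + s) * \<delta>" using E by (simp_all add: algebra_simps)
    ultimately show "(x + z, a + b) \<in> G0" unfolding G0_def by blast
  next
    fix x a r assume "(x,a) \<in> G0"
    then obtain m t where E: "m \<in> M" "x = m + t *\<^sub>R y" "a = t * \<delta>" unfolding G0_def by blast
    have "r *\<^sub>R m \<in> M" using M E by (simp add: subspace_scale)
    moreover have "r *\<^sub>R x = r *\<^sub>R m + (r * t) *\<^sub>R y" "r * a = (r * t) * \<delta>" using E by (simp_all add: algebra_simps)
    ultimately show "(r *\<^sub>R x, r * a) \<in> G0" unfolding G0_def by blast
  next
    fix x a assume "(x,a) \<in> G0"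
    then obtain m t where E: "m \<in> M" "x = m + t *\<^sub>R y" "a = t * \<delta>" unfolding G0_def by blast
    show "a \<le> p x"
    proof (cases "t > 0")
      case True
      have "p (t *\<^sub>R y) = p (x + (- m))" using E by simp
      also have "\<dots> \<le> p x + p (- m)" by (rule sub)
      also have "p (- m) = 0" unfolding p_def using M E(1) by (simp add: subspace_neg)
      finally show ?thesis using hom[OF True] E by (simp add: p_def \<delta>_def)
    next
      case False
      have "\<delta> \<ge> 0" unfolding \<delta>_def by (rule infdist_nonneg)
      then have "a \<le> 0" using E False by (simp add: mult_nonpos_nonneg)
      then show ?thesis using infdist_nonneg unfolding p_def by (metis order_trans)
    qed
  qed
  from hb_graph[OF sub hom this] obtain h where h: "linear h" "\<And>x a. (x,a)\<in>G0 \<Longrightarrow> h x = a" "\<And>x. h x \<le> p x"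
    by blast
  have pn: "p x \<le> norm x" for x unfolding p_def using infdist_le[OF subspace_0[OF M], of x] by simp
  have bnd: "norm (h x) \<le> norm x * 1" for x
  proof -
    have "h x \<le> norm x" using h(3) pn order_trans by blast
    moreover have "- h x \<le> norm x"
    proof -
      have "h (- x) \<le> norm (- x)" using h(3) pn order_trans by blast
      then show ?thesis using linear_neg[OF h(1)] by simp
    qed
    ultimately show ?thesis by simp
  qed
  have bl: "bounded_linear h"
    by (rule bounded_linear_intro[OF linear_add[OF h(1)] linear_scale[OF h(1)] bnd])
  define f where "f = Blinfun h"
  have fa: "blinfun_apply f = h" unfolding f_def by (rule bounded_linear_Blinfun_apply[OF bl])
  have "norm f \<le> 1" by (rule norm_blinfun_bound) (use bnd in \<open>auto simp: fa\<close>)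
  moreover have "\<forall>m\<in>M. blinfun_apply f m = 0"
  proof
    fix m assume "m \<in> M"
    then have "(m + 0 *\<^sub>R y, 0 * \<delta>) \<in> G0" unfolding G0_def by blast
    then show "blinfun_apply f m = 0" using h(2) fa by simp
  qed
  moreover have "blinfun_apply f y = infdist y M"
  proof -
    have "(0 + 1 *\<^sub>R y, 1 * \<delta>) \<in> G0" unfolding G0_def using subspace_0[OF M] by blast
    then show ?thesis using h(2) fa \<delta>_def by simp
  qed
  ultimately show ?thesis by blast
qed

lemma hb_norming:
  fixes y :: "'x::real_normed_vector"
  shows "\<exists>f::'x \<Rightarrow>\<^sub>L real. norm f \<le> 1 \<and> blinfun_apply f y = norm y"
  using hb_sub[OF subspace_single_0, of y] by simp

lemma sep_point:
  fixes x y :: "'x::real_normed_vector"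
  assumes "x \<noteq> y" shows "\<exists>f::'x \<Rightarrow>\<^sub>L real. blinfun_apply f x \<noteq> blinfun_apply f y"
proof -
  obtain f :: "'x \<Rightarrow>\<^sub>L real" where "blinfun_apply f (x - y) = norm (x - y)" using hb_norming by blast
  then have "blinfun_apply f x - blinfun_apply f y \<noteq> 0" using assms by (simp add: blinfun.diff_right)
  then show ?thesis by auto
qed



lemma approx_lemma:
  fixes C :: "'x::real_vector set" and I :: "'i set" and v :: "'i \<Rightarrow> 'x \<Rightarrow> real"
  assumes fin: "finite I" and conv: "convex C" and ne: "C \<noteq> {}"
   and lin: "\<And>i. i \<in> I \<Longrightarrow> linear (v i)"
   and bnd: "\<And>y i. y \<in> C \<Longrightarrow> i \<in> I \<Longrightarrow> \<bar>v i y\<bar> \<le> B"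
   and hyp: "\<And>c e. e > 0 \<Longrightarrow> \<exists>y\<in>C. (\<Sum>i\<in>I. c i * s i) \<le> (\<Sum>i\<in>I. c i * v i y) + e"
   and e: "e > 0"
  shows "\<exists>y\<in>C. \<forall>i\<in>I. \<bar>v i y - s i\<bar> < e"
proof -
  define d where "d y = (\<Sum>i\<in>I. (v i y - s i)\<^sup>2)" for y
  define \<delta> where "\<delta> = Inf (d ` C)"
  have d0: "d y \<ge> 0" for y unfolding d_def by (simp add: sum_nonneg)
  have bdd: "bdd_below (d ` C)" by (rule bdd_belowI[of _ 0]) (use d0 in auto)
  have dge: "y \<in> C \<Longrightarrow> \<delta> \<le> d y" for y unfolding \<delta>_def by (rule cInf_lower) (use bdd in auto)
  have \<delta>0: "\<delta> \<ge> 0" unfolding \<delta>_def using ne d0 by (intro cInf_greatest) auto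
  have "\<delta> = 0"
  proof (rule ccontr)
    assume "\<delta> \<noteq> 0"
    then have \<delta>p: "\<delta> > 0" using \<delta>0 by simp
    define M0 where "M0 = (\<Sum>i\<in>I. (2*B)\<^sup>2) + 1"
    have M0p: "M0 > 0" unfolding M0_def by (simp add: sum_nonneg add_nonneg_pos)
    define t where "t = min 1 (\<delta> / (2 * M0))"
    have tp: "t > 0" "t \<le> 1" using \<delta>p M0p by (auto simp: t_def)
    have tM: "t * M0 \<le> \<delta> / 2"
    proof -
      have "t \<le> \<delta> / (2 * M0)" by (simp add: t_def)
      then have "t * M0 \<le> \<delta> / (2 * M0) * M0" using M0p by (intro mult_right_mono) auto
      also have "\<dots> = \<delta> / 2" using M0p by simp
      finally show ?thesis .
    qed
    define \<eta> where "\<eta> = t * \<delta> / 2"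
    have \<eta>p: "\<eta> > 0" using tp \<delta>p by (simp add: \<eta>_def)
    obtain a0 where a0: "a0 \<in> C" "d a0 < \<delta> + \<eta>"
    proof -
      have "Inf (d ` C) < \<delta> + \<eta>" using \<eta>p by (simp add: \<delta>_def)
      moreover have "d ` C \<noteq> {}" using ne by blast
      ultimately obtain r where "r \<in> d ` C" "r < \<delta> + \<eta>" using cInf_lessD[of "d ` C" "\<delta> + \<eta>"] by blast
      then show ?thesis using that by blast
    qed
    define c where "c i = s i - v i a0" for i
    obtain a where a: "a \<in> C" "(\<Sum>i\<in>I. c i * s i) \<le> (\<Sum>i\<in>I. c i * v i a) + \<delta> / 4"
      using hyp[of "\<delta> / 4" c] \<delta>p by auto
    define w where "w i = v i a - v i a0" for i
    define P where "P = (\<Sum>i\<in>I. c i * w i)"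
    define W where "W = (\<Sum>i\<in>I. (w i)\<^sup>2)"
    define z where "z = (1 - t) *\<^sub>R a0 + t *\<^sub>R a"
    have zC: "z \<in> C" unfolding z_def using conv a0(1) a(1) tp by (intro convexD) auto
    have vz: "v i z = v i a0 + t * w i" if "i \<in> I" for i
    proof -
      have "v i z = (1 - t) * v i a0 + t * v i a"
        unfolding z_def using linear_add[OF lin[OF that]] linear_scale[OF lin[OF that]] by simp
      then show ?thesis by (simp add: w_def algebra_simps)
    qed
    have da0: "d a0 = (\<Sum>i\<in>I. (c i)\<^sup>2)" unfolding d_def c_def by (intro sum.cong refl) (simp add: power2_eq_square algebra_simps)
    have dz: "d z = d a0 - 2 * t * P + t\<^sup>2 * W"
    proof -
      have "d z = (\<Sum>i\<in>I. (c i)\<^sup>2 - 2 * t * (c i * w i) + t\<^sup>2 * (w i)\<^sup>2)"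
        unfolding d_def by (rule sum.cong; simp add: vz c_def power2_eq_square algebra_simps)
      also have "\<dots> = d a0 - 2 * t * P + t\<^sup>2 * W"
        by (simp only: sum.distrib sum_subtractf sum_distrib_left[symmetric] da0 P_def W_def)
      finally show ?thesis .
    qed
    have WM: "W \<le> M0"
    proof -
      have "W \<le> (\<Sum>i\<in>I. (2*B)\<^sup>2)" unfolding W_def
      proof (rule sum_mono)
        fix i assume i: "i \<in> I"
        have "\<bar>w i\<bar> \<le> 2 * B" using bnd[OF a(1) i] bnd[OF a0(1) i] by (simp add: w_def)
        then have "\<bar>w i\<bar>\<^sup>2 \<le> (2 * B)\<^sup>2" by (intro power_mono) auto
        then show "(w i)\<^sup>2 \<le> (2 * B)\<^sup>2" by simp
      qed
      then show ?thesis unfolding M0_def by simp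
    qed
    have W0: "W \<ge> 0" unfolding W_def by (simp add: sum_nonneg)
    have "\<delta> \<le> d z" by (rule dge[OF zC])
    then have "2 * t * P \<le> \<eta> + t\<^sup>2 * W" using dz a0(2) by linarith
    then have "t * (2 * P) \<le> t * (\<delta> / 2 + t * W)" by (simp add: \<eta>_def power2_eq_square algebra_simps)
    then have "2 * P \<le> \<delta> / 2 + t * W" by (simp only: mult_le_cancel_left_pos[OF tp(1)])
    moreover have "t * W \<le> t * M0" using WM tp by (intro mult_left_mono) auto
    ultimately have Pb: "2 * P \<le> \<delta>" using tM by linarith
    have "(\<Sum>i\<in>I. c i * s i) - (\<Sum>i\<in>I. c i * v i a0) = (\<Sum>i\<in>I. c i * s i - c i * v i a0)"
      by (simp only: sum_subtractf)
    also have "\<dots> = d a0" unfolding da0 by (rule sum.cong; simp add: c_def power2_eq_square algebra_simps)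
    finally have e1: "(\<Sum>i\<in>I. c i * s i) - (\<Sum>i\<in>I. c i * v i a0) = d a0" .
    have "(\<Sum>i\<in>I. c i * v i a) - (\<Sum>i\<in>I. c i * v i a0) = (\<Sum>i\<in>I. c i * v i a - c i * v i a0)"
      by (simp only: sum_subtractf)
    also have "\<dots> = P" unfolding P_def by (rule sum.cong; simp add: w_def algebra_simps)
    finally have e2: "(\<Sum>i\<in>I. c i * v i a) - (\<Sum>i\<in>I. c i * v i a0) = P" .
    have "d a0 \<le> P + \<delta> / 4" using e1 e2 a(2) by linarith
    moreover have "\<delta> \<le> d a0" by (rule dge[OF a0(1)])
    ultimately show False using Pb \<delta>p by linarith
  qed
  then have "Inf (d ` C) < e\<^sup>2" using e by (simp add: \<delta>_def)
  moreover have "d ` C \<noteq> {}" using ne by blast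
  ultimately obtain r where "r \<in> d ` C" "r < e\<^sup>2" using cInf_lessD[of "d ` C" "e\<^sup>2"] by blast
  then obtain y where y: "y \<in> C" "d y < e\<^sup>2" by blast
  have "\<bar>v i y - s i\<bar> < e" if i: "i \<in> I" for i
  proof -
    have "(v i y - s i)\<^sup>2 \<le> d y" unfolding d_def by (rule member_le_sum[OF i _ fin]) simp
    then have "(v i y - s i)\<^sup>2 < e\<^sup>2" using y(2) by linarith
    then have "\<bar>v i y - s i\<bar>\<^sup>2 < e\<^sup>2" by (simp only: power2_abs)
    then show ?thesis by (rule power2_less_imp_less) (use e in simp)
  qed
  then show ?thesis using y(1) by blast
qed



lemma kappa_add: "kappa (x + y) = kappa x + kappa y"
  by (rule blinfun_eqI) (simp add: blinfun.add_left blinfun.add_right)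
lemma kappa_scale: "kappa (r *\<^sub>R x) = r *\<^sub>R kappa x"
  by (rule blinfun_eqI) (simp add: blinfun.scaleR_left blinfun.scaleR_right)
lemma kappa_zero: "kappa 0 = 0"
  by (rule blinfun_eqI) simp

lemma norm_kappa: "norm (kappa (x::'x::real_normed_vector)) = norm x"
proof (rule antisym)
  show "norm (kappa x) \<le> norm x"
    apply (rule norm_blinfun_bound)
     apply simp
    subgoal for f using norm_blinfun[of f x] by (simp add: mult.commute)
    done
  obtain f :: "'x \<Rightarrow>\<^sub>L real" where f: "norm f \<le> 1" "blinfun_apply f x = norm x" using hb_norming by blast
  have "norm x = norm (blinfun_apply (kappa x) f)" using f by simp
  also have "\<dots> \<le> norm (kappa x) * norm f" by (rule norm_blinfun)
  also have "\<dots> \<le> norm (kappa x)" using f(1) by (simp add: mult_left_le)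
  finally show "norm x \<le> norm (kappa x)" .
qed

lemma kappa_inj: "kappa (x::'x::real_normed_vector) = kappa y \<Longrightarrow> x = y"
  by (metis norm_kappa kappa_add kappa_scale add_diff_cancel_left' diff_add_cancel
      right_minus_eq scaleR_minus1_left norm_eq_zero add.commute) 

lemma gamma_inj: "gamma (a::'x::real_normed_vector \<Rightarrow>\<^sub>L 'x) = gamma b \<Longrightarrow> a = b"
  unfolding gamma_def by (rule blinfun_eqI) (metis kappa_inj)

lemma phihat_eq: "phitilde \<phi> S = gamma c \<Longrightarrow> phihat \<phi> S = c"
  unfolding phihat_def by (rule the_equality) (auto dest: gamma_inj)

lemma biadj_kappa: "blinfun_apply (biadj T) (kappa a) = kappa (blinfun_apply T a)"
  by (rule blinfun_eqI) simp

lemma norm_approx: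
  fixes g :: "'a::real_normed_vector \<Rightarrow>\<^sub>L real"
  assumes e: "e > 0"
  shows "\<exists>a. norm a \<le> 1 \<and> norm g - e \<le> blinfun_apply g a"
proof (rule ccontr)
  assume "\<not> ?thesis"
  then have lt: "\<And>a. norm a \<le> 1 \<Longrightarrow> blinfun_apply g a < norm g - e" by force
  have pos: "norm g - e > 0" using lt[of 0] by simp
  have "\<bar>blinfun_apply g x\<bar> \<le> (norm g - e) * norm x" for x
  proof (cases "x = 0")
    case True then show ?thesis by simp
  next
    case False
    define a where "a = (1 / norm x) *\<^sub>R x"
    have na: "norm a \<le> 1" "norm (- a) \<le> 1" using False by (simp_all add: a_def)
    have "blinfun_apply g a < norm g - e" "blinfun_apply g (- a) < norm g - e" using lt na by blast+
    then have "\<bar>blinfun_apply g a\<bar> \<le> norm g - e" by (simp add: blinfun.minus_right)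
    moreover have "blinfun_apply g x = norm x * blinfun_apply g a"
      using False by (simp add: a_def blinfun.scaleR_right)
    ultimately show ?thesis using False by (simp add: abs_mult mult.commute mult_right_mono)
  qed
  then have "norm g \<le> norm g - e" using pos by (intro norm_blinfun_bound) auto
  then show False using e by simp
qed

lemma wstar_limitin:
  "limitin wstar_top g l F \<longleftrightarrow> (\<forall>f. ((\<lambda>x. blinfun_apply (g x) f) \<longlongrightarrow> blinfun_apply l f) F)"
  unfolding wstar_top_eq by (subst init_top_limitin) auto

lemma wstar_Hausdorff: "Hausdorff_space wstar_top"
  unfolding wstar_top_eq
proof (rule init_top_Hausdorff)
  fix x y :: "'e::real_normed_vector bidual" assume "x \<noteq> y"
  then obtain f where "blinfun_apply x f \<noteq> blinfun_apply y f" using blinfun_eqI by metis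
  then show "\<exists>h\<in>range (\<lambda>f \<Phi>. blinfun_apply \<Phi> f). h x \<noteq> h y"
    by (intro bexI[of _ "\<lambda>\<Phi>. blinfun_apply \<Phi> f"]) auto
qed auto

lemma weak_Hausdorff: "Hausdorff_space (weak_top :: 'x::real_normed_vector topology)"
  unfolding weak_top_eq
proof (rule init_top_Hausdorff)
  fix x y :: 'x assume "x \<noteq> y"
  then obtain f :: "'x \<Rightarrow>\<^sub>L real" where "blinfun_apply f x \<noteq> blinfun_apply f y" using sep_point by blast
  then show "\<exists>h\<in>range (blinfun_apply :: ('x \<Rightarrow>\<^sub>L real) \<Rightarrow> 'x \<Rightarrow> real). h x \<noteq> h y" using rangeI[of blinfun_apply f] by blast
qed auto

lemma wlim_eq:
  assumes "limitin wstar_top h R F" "F \<noteq> bot"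
  shows "wlim F h = R"
  unfolding wlim_def
proof (rule the_equality)
  show "limitin wstar_top h R F" by (rule assms(1))
  fix R' assume R': "limitin wstar_top h R' F"
  show "R' = R" using limitin_Hausdorff_unique[OF R' assms(1) _ wstar_Hausdorff] assms(2) by auto
qed

lemma wstar_cont: "continuous_map wstar_top euclideanreal (\<lambda>\<Phi>. blinfun_apply \<Phi> f)"
  unfolding wstar_top_eq by (rule init_top_cont) auto

lemma weak_cont: "continuous_map weak_top euclideanreal (blinfun_apply f)"
  unfolding weak_top_eq by (rule init_top_cont) auto

lemma weak_topspace[simp]: "topspace weak_top = UNIV"
  unfolding weak_top_eq by simp

lemma wstar_topspace[simp]: "topspace wstar_top = UNIV"
  unfolding wstar_top_eq by simp



lemma alaoglu: "compactin wstar_top (cball (0::'e::real_normed_vector bidual) 1)"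
proof -
  define P where "P = product_topology (\<lambda>_::('e \<Rightarrow>\<^sub>L real). euclideanreal) UNIV"
  define Q where "Q = {g::('e \<Rightarrow>\<^sub>L real) \<Rightarrow> real. (\<forall>f. \<bar>g f\<bar> \<le> norm f) \<and>
      (\<forall>f1 f2. g (f1 + f2) - g f1 - g f2 = 0) \<and> (\<forall>r f. g (r *\<^sub>R f) - r * g f = 0)}"
  have tsP: "topspace P = UNIV" unfolding P_def by (simp add: PiE_UNIV_domain)
  have proj: "continuous_map P euclideanreal (\<lambda>g. g f)" for f
    unfolding P_def by (rule continuous_map_product_projection) simp
  have cP: "compactin P (PiE UNIV (\<lambda>f. cball 0 (norm f)))"
    unfolding P_def by (simp add: compactin_PiE)
  have QP: "Q \<subseteq> PiE UNIV (\<lambda>f. cball 0 (norm f))"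
    unfolding Q_def by (auto simp: PiE_UNIV_domain)
  define K :: "(('e \<Rightarrow>\<^sub>L real) \<Rightarrow> real) set set" where "K = {{g. \<bar>g f\<bar> \<le> norm f} | f. True} \<union> {{g. g (f1 + f2) - g f1 - g f2 = 0} | f1 f2. True}
     \<union> {{g. g (r *\<^sub>R f) - r * g f = 0} | r f. True}"
  have QK: "Q = \<Inter>K"
  proof
    show "Q \<subseteq> \<Inter>K" unfolding Q_def K_def by auto
    show "\<Inter>K \<subseteq> Q"
    proof
      fix g assume g: "g \<in> \<Inter>K"
      have 1: "\<bar>g f\<bar> \<le> norm f" for f
      proof -
        have "{g. \<bar>g f\<bar> \<le> norm f} \<in> K" unfolding K_def by blast
        then show ?thesis using g by blast
      qed
      have 2: "g (f1 + f2) - g f1 - g f2 = 0" for f1 f2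
      proof -
        have "{g. g (f1 + f2) - g f1 - g f2 = 0} \<in> K" unfolding K_def by blast
        then show ?thesis using g by blast
      qed
      have 3: "g (r *\<^sub>R f) - r * g f = 0" for r f
      proof -
        have "{g. g (r *\<^sub>R f) - r * g f = 0} \<in> K" unfolding K_def by blast
        then show ?thesis using g by blast
      qed
      show "g \<in> Q" unfolding Q_def using 1 2 3 by blast
    qed
  qed
  have "closedin P (\<Inter>K)"
  proof (rule closedin_Inter)
    show "K \<noteq> {}" unfolding K_def by blast
    fix C assume "C \<in> K"
    then consider f where "C = {g. \<bar>g f\<bar> \<le> norm f}" | f1 f2 where "C = {g. g (f1 + f2) - g f1 - g f2 = 0}"
      | r f where "C = {g. g (r *\<^sub>R f) - r * g f = 0}" unfolding K_def by blast
    then show "closedin P C"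
    proof cases
      case 1
      have "closedin P {g \<in> topspace P. g f \<in> cball 0 (norm f)}"
        by (rule closedin_continuous_map_preimage[OF proj]) (simp add: closed_closedin[symmetric])
      then show ?thesis using 1 by (simp add: tsP)
    next
      case 2
      have "continuous_map P euclideanreal (\<lambda>g. g (f1 + f2) - g f1 - g f2)"
        by (intro continuous_map_diff proj)
      then have "closedin P {g \<in> topspace P. g (f1 + f2) - g f1 - g f2 \<in> {0}}"
        by (rule closedin_continuous_map_preimage) simp
      then show ?thesis using 2 by (simp add: tsP)
    next
      case 3
      have "continuous_map P euclideanreal (\<lambda>g. g (r *\<^sub>R f) - r * g f)"
        by (intro continuous_map_diff continuous_map_real_mult_left proj)
      then have "closedin P {g \<in> topspace P. g (r *\<^sub>R f) - r * g f \<in> {0}}"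
        by (rule closedin_continuous_map_preimage) simp
      then show ?thesis using 3 by (simp add: tsP)
    qed
  qed
  then have clQ: "closedin P Q" using QK by simp
  have cQ: "compactin P Q" by (rule closed_compactin[OF cP QP clQ])
  have blQ: "bounded_linear g" if "g \<in> Q" for g
  proof (rule bounded_linear_intro[where K=1])
    show "g (x + y) = g x + g y" for x y using that unfolding Q_def by (simp add: algebra_simps)
    show "g (r *\<^sub>R x) = r *\<^sub>R g x" for r x using that unfolding Q_def by simp
    show "norm (g x) \<le> norm x * 1" for x using that unfolding Q_def by simp
  qed
  define \<rho> where "\<rho> g = (Blinfun g :: 'e bidual)" for g
  have \<rho>a: "g \<in> Q \<Longrightarrow> blinfun_apply (\<rho> g) = g" for g unfolding \<rho>_def by (rule bounded_linear_Blinfun_apply[OF blQ])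
  have cont: "continuous_map (subtopology P Q) wstar_top \<rho>"
    unfolding wstar_top_eq
  proof (rule init_top_cont_into)
    fix h :: "'e bidual \<Rightarrow> real" assume "h \<in> range (\<lambda>f \<Phi>. blinfun_apply \<Phi> f)"
    then obtain f where h: "h = (\<lambda>\<Phi>. blinfun_apply \<Phi> f)" by blast
    have "continuous_map (subtopology P Q) euclideanreal (\<lambda>g. g f)"
      by (rule continuous_map_from_subtopology[OF proj])
    then show "continuous_map (subtopology P Q) euclideanreal (\<lambda>g. h (\<rho> g))"
      by (rule continuous_map_eq) (simp add: h \<rho>a)
  qed auto
  have "compactin (subtopology P Q) Q" using cQ by (simp add: compactin_subtopology)
  then have "compactin wstar_top (\<rho> ` Q)" by (rule image_compactin[OF _ cont])
  moreover have "\<rho> ` Q = cball 0 1"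
  proof
    show "\<rho> ` Q \<subseteq> cball 0 1"
    proof
      fix \<Phi> assume "\<Phi> \<in> \<rho> ` Q"
      then obtain g where g: "g \<in> Q" "\<Phi> = \<rho> g" by blast
      have "norm \<Phi> \<le> 1" unfolding g(2)
        by (rule norm_blinfun_bound) (use g(1) in \<open>auto simp: \<rho>a Q_def\<close>)
      then show "\<Phi> \<in> cball 0 1" by simp
    qed
    show "cball 0 1 \<subseteq> \<rho> ` Q"
    proof
      fix \<Phi> :: "'e bidual" assume "\<Phi> \<in> cball 0 1"
      then have n: "norm \<Phi> \<le> 1" by simp
      have "blinfun_apply \<Phi> \<in> Q" unfolding Q_def
      proof (intro CollectI conjI allI)
        fix f
        have "\<bar>blinfun_apply \<Phi> f\<bar> \<le> norm \<Phi> * norm f" using norm_blinfun[of \<Phi> f] by simp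
        also have "\<dots> \<le> norm f" using n by (simp add: mult_left_le_one_le)
        finally show "\<bar>blinfun_apply \<Phi> f\<bar> \<le> norm f" .
      qed (simp_all add: blinfun.add_right blinfun.scaleR_right)
      moreover have "\<rho> (blinfun_apply \<Phi>) = \<Phi>" unfolding \<rho>_def by (rule blinfun_apply_inverse)
      ultimately show "\<Phi> \<in> \<rho> ` Q" by (metis image_eqI)
    qed
  qed
  ultimately show ?thesis by simp
qed

lemma goldstine_approx:
  fixes S :: "'a::real_normed_vector bidual"
  assumes "finite Fs" "e > 0"
  shows "\<exists>a. norm a \<le> norm S \<and> (\<forall>f\<in>Fs. \<bar>blinfun_apply f a - blinfun_apply S f\<bar> < e)"
proof -
  define r where "r = norm S"
  have r0: "r \<ge> 0" by (simp add: r_def)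
  have "\<exists>y\<in>cball 0 r. \<forall>f\<in>Fs. \<bar>blinfun_apply f y - blinfun_apply S f\<bar> < e"
  proof (rule approx_lemma[where B = "(\<Sum>f\<in>Fs. norm f) * r"])
    show "finite Fs" "convex (cball (0::'a) r)" "cball (0::'a) r \<noteq> {}" "e > 0"
      using assms r0 by auto
    show "linear (blinfun_apply f)" for f :: "'a \<Rightarrow>\<^sub>L real"
      by (rule bounded_linear.linear[OF blinfun.bounded_linear_right])
    fix y f assume y: "y \<in> cball (0::'a) r" and f: "f \<in> Fs"
    have "\<bar>blinfun_apply f y\<bar> \<le> norm f * norm y" using norm_blinfun[of f y] by simp
    also have "\<dots> \<le> norm f * r" using y by (intro mult_left_mono) auto
    also have "\<dots> \<le> (\<Sum>f\<in>Fs. norm f) * r"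
      using r0 by (intro mult_right_mono member_le_sum[OF f _ assms(1)]) auto
    finally show "\<bar>blinfun_apply f y\<bar> \<le> (\<Sum>f\<in>Fs. norm f) * r" .
  next
    fix c :: "('a \<Rightarrow>\<^sub>L real) \<Rightarrow> real" and \<epsilon> :: real assume \<epsilon>: "\<epsilon> > 0"
    define g where "g = (\<Sum>f\<in>Fs. c f *\<^sub>R f)"
    have gy: "blinfun_apply g y = (\<Sum>f\<in>Fs. c f * blinfun_apply f y)" for y
      unfolding g_def by (simp add: blinfun.sum_left blinfun.scaleR_left)
    have Sg: "blinfun_apply S g = (\<Sum>f\<in>Fs. c f * blinfun_apply S f)"
      unfolding g_def by (simp add: blinfun.sum_right blinfun.scaleR_right)
    obtain a where a: "norm a \<le> 1" "norm g - \<epsilon> / (r + 1) \<le> blinfun_apply g a"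
      using norm_approx[of "\<epsilon> / (r + 1)" g] \<epsilon> r0 by auto
    define y where "y = r *\<^sub>R a"
    have yC: "y \<in> cball 0 r" using a(1) r0 by (simp add: y_def mult_left_le)
    have "blinfun_apply S g \<le> r * norm g"
      using norm_blinfun[of S g] by (simp add: r_def)
    also have "\<dots> \<le> r * (blinfun_apply g a + \<epsilon> / (r + 1))" using a(2) r0 by (intro mult_left_mono) auto
    also have "\<dots> = blinfun_apply g y + r * (\<epsilon> / (r + 1))"
      by (simp add: y_def blinfun.scaleR_right distrib_left)
    also have "r * (\<epsilon> / (r + 1)) \<le> \<epsilon>"
    proof -
      have "r * (\<epsilon> / (r + 1)) = \<epsilon> * (r / (r + 1))" by simp
      also have "\<dots> \<le> \<epsilon> * 1" using r0 \<epsilon> by (intro mult_left_mono) auto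
      finally show ?thesis by simp
    qed
    finally have "blinfun_apply S g \<le> blinfun_apply g y + \<epsilon>" by simp
    then show "\<exists>y\<in>cball 0 r. (\<Sum>f\<in>Fs. c f * blinfun_apply S f) \<le> (\<Sum>f\<in>Fs. c f * blinfun_apply f y) + \<epsilon>"
      using yC by (auto simp: Sg gy)
  qed
  then show ?thesis by (auto simp: r_def)
qed

lemma goldstine:
  fixes S :: "'a::real_normed_vector bidual"
  shows "\<exists>F. bnd_net F S"
proof -
  define F where "F = inf (filtercomap kappa (nhdsin wstar_top S)) (principal (cball 0 (norm S)))"
  have nb: "F \<noteq> bot"
  proof
    assume "F = bot"
    then have "eventually (\<lambda>_. False) F" by simp
    then have "eventually (\<lambda>a. a \<in> cball 0 (norm S) \<longrightarrow> False) (filtercomap kappa (nhdsin wstar_top S))"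
      unfolding F_def eventually_inf_principal .
    then obtain Q where Q: "eventually Q (nhdsin wstar_top S)" "\<And>a. Q (kappa a) \<Longrightarrow> a \<notin> cball 0 (norm S)"
      unfolding eventually_filtercomap by blast
    then obtain W where W: "openin wstar_top W" "S \<in> W" "\<And>x. x \<in> W \<Longrightarrow> Q x"
      unfolding eventually_nhdsin by auto
    obtain Hs e where He: "finite Hs" "Hs \<subseteq> range (\<lambda>f \<Phi>. blinfun_apply \<Phi> f)" "e > 0"
      "{z. \<forall>h\<in>Hs. \<bar>h z - h S\<bar> < e} \<subseteq> W"
    proof -
      have Wo: "openin (init_top (range (\<lambda>f \<Phi>. blinfun_apply \<Phi> f))) W" using W(1) unfolding wstar_top_eq .
      show ?thesis using init_top_open_nbhd[OF Wo W(2)] that by blast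
    qed
    obtain Fs where Fs: "finite Fs" "Hs = (\<lambda>f \<Phi>. blinfun_apply \<Phi> f) ` Fs"
      using finite_subset_image[OF He(1,2)] by blast
    obtain a where a: "norm a \<le> norm S" "\<forall>f\<in>Fs. \<bar>blinfun_apply f a - blinfun_apply S f\<bar> < e"
      using goldstine_approx[OF Fs(1) He(3)] by blast
    have "kappa a \<in> {z. \<forall>h\<in>Hs. \<bar>h z - h S\<bar> < e}" using a(2) unfolding Fs(2) by auto
    then have "kappa a \<in> W" using He(4) by blast
    then have "a \<notin> cball 0 (norm S)" using W(3) Q(2) by blast
    then show False using a(1) by simp
  qed
  have bd: "eventually (\<lambda>a. a \<in> cball 0 (norm S)) F"
    unfolding F_def eventually_inf_principal by simp
  have lim: "limitin wstar_top kappa S F"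
    unfolding limitin_def
  proof (intro conjI allI impI)
    show "S \<in> topspace wstar_top" by simp
    fix U assume U: "openin wstar_top U \<and> S \<in> U"
    have "eventually (\<lambda>a. kappa a \<in> U) (filtercomap kappa (nhdsin wstar_top S))"
      unfolding eventually_filtercomap
      by (rule exI[of _ "\<lambda>x. x \<in> U"]) (use U in \<open>auto simp: eventually_nhdsin\<close>)
    then show "eventually (\<lambda>a. kappa a \<in> U) F" unfolding F_def by (rule filter_leD[OF inf_le1])
  qed
  show ?thesis unfolding bnd_net_def
    using nb bd lim by (intro exI[of _ F] conjI) (auto intro: exI[of _ "cball 0 (norm S)"])
qed



lemma weak_closed_strip:
  fixes f :: "'x::real_normed_vector \<Rightarrow>\<^sub>L real" and c e :: real
  shows "closedin weak_top {y. \<bar>blinfun_apply f y - c\<bar> \<le> e}"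
proof -
  have "closedin weak_top {y \<in> topspace weak_top. blinfun_apply f y \<in> cball c e}"
    by (rule closedin_continuous_map_preimage[OF weak_cont]) (simp add: closed_closedin[symmetric])
  then show ?thesis by (simp add: dist_real_def abs_minus_commute)
qed

lemma gantmacher1:
  fixes T :: "'a::real_normed_vector \<Rightarrow>\<^sub>L 'x::real_normed_vector"
  assumes H: "\<And>S. \<exists>y. blinfun_apply (biadj T) S = kappa y"
  shows "weakly_compact T"
proof -
  define \<Theta> where "\<Theta> S = (SOME y. blinfun_apply (biadj T) S = kappa y)" for S
  have \<Theta>: "kappa (\<Theta> S) = blinfun_apply (biadj T) S" for S
    unfolding \<Theta>_def by (rule someI_ex[OF H, THEN sym])
  define B where "B = cball (0::'a bidual) 1"
  have cont: "continuous_map (subtopology wstar_top B) weak_top \<Theta>"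
    unfolding weak_top_eq
  proof (rule init_top_cont_into)
    fix h :: "'x \<Rightarrow> real" assume "h \<in> range (blinfun_apply :: ('x \<Rightarrow>\<^sub>L real) \<Rightarrow> _)"
    then obtain f :: "'x \<Rightarrow>\<^sub>L real" where h: "h = blinfun_apply f" by blast
    have "h (\<Theta> S) = blinfun_apply S (f o\<^sub>L T)" for S
    proof -
      have "h (\<Theta> S) = blinfun_apply (kappa (\<Theta> S)) f" by (simp add: h)
      also have "\<dots> = blinfun_apply S (f o\<^sub>L T)" by (simp add: \<Theta>)
      finally show ?thesis .
    qed
    moreover have "continuous_map (subtopology wstar_top B) euclideanreal (\<lambda>S. blinfun_apply S (f o\<^sub>L T))"
      by (rule continuous_map_from_subtopology[OF wstar_cont])
    ultimately show "continuous_map (subtopology wstar_top B) euclideanreal (\<lambda>S. h (\<Theta> S))" by simp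
  qed auto
  have "compactin (subtopology wstar_top B) B" unfolding B_def by (simp add: compactin_subtopology alaoglu)
  then have cI: "compactin weak_top (\<Theta> ` B)" by (rule image_compactin[OF _ cont])
  then have clI: "closedin weak_top (\<Theta> ` B)" by (rule compactin_imp_closedin[OF weak_Hausdorff])
  have sub: "blinfun_apply T ` cball 0 1 \<subseteq> \<Theta> ` B"
  proof
    fix y assume "y \<in> blinfun_apply T ` cball 0 1"
    then obtain a where a: "norm a \<le> 1" "y = blinfun_apply T a" by auto
    have "kappa a \<in> B" using a(1) by (simp add: B_def norm_kappa)
    moreover have "\<Theta> (kappa a) = y" using \<Theta>[of "kappa a"] a(2) by (simp add: biadj_kappa kappa_inj)
    ultimately show "y \<in> \<Theta> ` B" by blast
  qed
  have "weak_top closure_of (blinfun_apply T ` cball 0 1) \<subseteq> \<Theta> ` B"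
    by (rule closure_of_minimal[OF sub clI])
  then show ?thesis unfolding weakly_compact_def
    by (rule closed_compactin[OF cI]) simp
qed

lemma gantmacher2_ball:
  fixes T :: "'a::real_normed_vector \<Rightarrow>\<^sub>L 'x::real_normed_vector"
  assumes wc: "weakly_compact T" and S: "norm S \<le> 1"
  shows "\<exists>y. blinfun_apply (biadj T) S = kappa y"
proof -
  define K where "K = weak_top closure_of (blinfun_apply T ` cball 0 1)"
  define \<Phi> where "\<Phi> = blinfun_apply (biadj T) S"
  have \<Phi>: "blinfun_apply \<Phi> g = blinfun_apply S (g o\<^sub>L T)" for g by (simp add: \<Phi>_def)
  have cK: "compactin weak_top K" using wc unfolding weakly_compact_def K_def .
  define U where "U = {{y. \<bar>blinfun_apply f y - blinfun_apply \<Phi> f\<bar> \<le> e} | f e. e > 0}"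
  have CK: "blinfun_apply T ` cball 0 1 \<subseteq> K" unfolding K_def by (rule closure_of_subset) simp
  have "K \<inter> \<Inter>U \<noteq> {}"
  proof (rule compactin_fip[THEN iffD1, OF cK, THEN conjunct2, rule_format], intro conjI allI impI)
    show "\<forall>C\<in>U. closedin weak_top C" unfolding U_def using weak_closed_strip by blast
    fix \<F> assume \<F>: "finite \<F> \<and> \<F> \<subseteq> U"
    define fo where "fo A = (SOME f. \<exists>e>0. A = {y. \<bar>blinfun_apply f y - blinfun_apply \<Phi> f\<bar> \<le> e})" for A
    define eo where "eo A = (SOME e. e > 0 \<and> A = {y. \<bar>blinfun_apply (fo A) y - blinfun_apply \<Phi> (fo A)\<bar> \<le> e})" for A
    have feo: "eo A > 0 \<and> A = {y. \<bar>blinfun_apply (fo A) y - blinfun_apply \<Phi> (fo A)\<bar> \<le> eo A}" if "A \<in> U" for A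
    proof -
      have "\<exists>f. \<exists>e>0. A = {y. \<bar>blinfun_apply f y - blinfun_apply \<Phi> f\<bar> \<le> e}" using that unfolding U_def by blast
      then have "\<exists>e>0. A = {y. \<bar>blinfun_apply (fo A) y - blinfun_apply \<Phi> (fo A)\<bar> \<le> e}"
        unfolding fo_def by (rule someI_ex)
      then show ?thesis unfolding eo_def by (rule someI_ex)
    qed
    define e0 where "e0 = Min (insert 1 (eo ` \<F>))"
    have e0: "e0 > 0" unfolding e0_def using \<F> feo by auto
    have e0le: "e0 \<le> eo A" if "A \<in> \<F>" for A unfolding e0_def using \<F> that by auto
    define C where "C = blinfun_apply T ` cball 0 1"
    have "\<exists>y\<in>C. \<forall>A\<in>\<F>. \<bar>blinfun_apply (fo A) y - blinfun_apply \<Phi> (fo A)\<bar> < e0"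
    proof (rule approx_lemma[where B = "(\<Sum>A\<in>\<F>. norm (fo A)) * norm T"])
      show "finite \<F>" using \<F> by simp
      show "convex C" unfolding C_def
        by (rule convex_linear_image[OF _ convex_cball]) (rule bounded_linear.linear[OF blinfun.bounded_linear_right])
      show "C \<noteq> {}" unfolding C_def by auto
      show "e0 > 0" by (rule e0)
      show "linear (blinfun_apply (fo A))" for A
        by (rule bounded_linear.linear[OF blinfun.bounded_linear_right])
      fix y A assume y: "y \<in> C" and A: "A \<in> \<F>"
      then obtain a where a: "norm a \<le> 1" "y = blinfun_apply T a" unfolding C_def by auto
      have "\<bar>blinfun_apply (fo A) y\<bar> \<le> norm (fo A) * norm y" using norm_blinfun[of "fo A" y] by simp
      also have "\<dots> \<le> norm (fo A) * norm T"
      proof (intro mult_left_mono)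
        have "norm y \<le> norm T * norm a" using a(2) norm_blinfun[of T a] by simp
        also have "\<dots> \<le> norm T" using a(1) by (simp add: mult_left_le)
        finally show "norm y \<le> norm T" .
      qed simp
      also have "\<dots> \<le> (\<Sum>A\<in>\<F>. norm (fo A)) * norm T"
        using \<F> A by (intro mult_right_mono member_le_sum[OF A]) auto
      finally show "\<bar>blinfun_apply (fo A) y\<bar> \<le> (\<Sum>A\<in>\<F>. norm (fo A)) * norm T" .
    next
      fix c :: "'x set \<Rightarrow> real" and \<epsilon> :: real assume \<epsilon>: "\<epsilon> > 0"
      define g where "g = (\<Sum>A\<in>\<F>. c A *\<^sub>R fo A)"
      have gy: "blinfun_apply g y = (\<Sum>A\<in>\<F>. c A * blinfun_apply (fo A) y)" for y
        unfolding g_def by (simp add: blinfun.sum_left blinfun.scaleR_left)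
      have \<Phi>g: "blinfun_apply \<Phi> g = (\<Sum>A\<in>\<F>. c A * blinfun_apply \<Phi> (fo A))"
        unfolding g_def by (simp add: blinfun.sum_right blinfun.scaleR_right)
      obtain a where a: "norm a \<le> 1" "norm (g o\<^sub>L T) - \<epsilon> \<le> blinfun_apply (g o\<^sub>L T) a"
        using norm_approx[OF \<epsilon>] by blast
      have "blinfun_apply \<Phi> g = blinfun_apply S (g o\<^sub>L T)" by (rule \<Phi>)
      also have "\<dots> \<le> norm S * norm (g o\<^sub>L T)" using norm_blinfun[of S "g o\<^sub>L T"] by simp
      also have "\<dots> \<le> norm (g o\<^sub>L T)" using S by (simp add: mult_left_le_one_le)
      finally have "blinfun_apply \<Phi> g \<le> blinfun_apply g (blinfun_apply T a) + \<epsilon>" using a(2) by simp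
      moreover have "blinfun_apply T a \<in> C" using a(1) unfolding C_def by simp
      ultimately show "\<exists>y\<in>C. (\<Sum>A\<in>\<F>. c A * blinfun_apply \<Phi> (fo A)) \<le> (\<Sum>A\<in>\<F>. c A * blinfun_apply (fo A) y) + \<epsilon>"
        by (auto simp: \<Phi>g gy)
    qed
    then obtain y where y: "y \<in> C" "\<And>A. A \<in> \<F> \<Longrightarrow> \<bar>blinfun_apply (fo A) y - blinfun_apply \<Phi> (fo A)\<bar> < e0" by blast
    have "y \<in> K" using y(1) CK unfolding C_def by blast
    moreover have "y \<in> A" if "A \<in> \<F>" for A
    proof -
      have "A \<in> U" using that \<F> by blast
      have "\<bar>blinfun_apply (fo A) y - blinfun_apply \<Phi> (fo A)\<bar> \<le> eo A" using y(2)[OF that] e0le[OF that] by simp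
      then show ?thesis using feo[OF \<open>A \<in> U\<close>] by blast
    qed
    ultimately show "K \<inter> \<Inter>\<F> \<noteq> {}" by blast
  qed
  then obtain y where y: "y \<in> \<Inter>U" by blast
  have "blinfun_apply f y = blinfun_apply \<Phi> f" for f
  proof -
    have le: "\<bar>blinfun_apply f y - blinfun_apply \<Phi> f\<bar> \<le> e" if "e > 0" for e
    proof -
      have "{y. \<bar>blinfun_apply f y - blinfun_apply \<Phi> f\<bar> \<le> e} \<in> U" unfolding U_def using that by blast
      then show ?thesis using y by blast
    qed
    have "\<bar>blinfun_apply f y - blinfun_apply \<Phi> f\<bar> \<le> 0 + e" if "e > 0" for e using le[OF that] by simp
    then have "\<bar>blinfun_apply f y - blinfun_apply \<Phi> f\<bar> \<le> 0" by (rule field_le_epsilon)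
    then show ?thesis by simp
  qed
  then have "\<Phi> = kappa y" by (intro blinfun_eqI) simp
  then show ?thesis unfolding \<Phi>_def by blast
qed

lemma gantmacher2:
  fixes T :: "'a::real_normed_vector \<Rightarrow>\<^sub>L 'x::real_normed_vector"
  assumes wc: "weakly_compact T"
  shows "\<exists>y. blinfun_apply (biadj T) S = kappa y"
proof (cases "S = 0")
  case True then show ?thesis by (intro exI[of _ 0]) (simp add: kappa_zero)
next
  case False
  define r where "r = norm S"
  have r: "r > 0" using False by (simp add: r_def)
  have "norm ((1 / r) *\<^sub>R S) \<le> 1" using r by (simp add: r_def)
  then obtain y where y: "blinfun_apply (biadj T) ((1 / r) *\<^sub>R S) = kappa y"
    using gantmacher2_ball[OF wc] by blast
  have "S = r *\<^sub>R ((1 / r) *\<^sub>R S)" using r by simp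
  then have "blinfun_apply (biadj T) S = r *\<^sub>R blinfun_apply (biadj T) ((1 / r) *\<^sub>R S)"
    by (metis blinfun.scaleR_right)
  also have "\<dots> = kappa (r *\<^sub>R y)" by (simp add: y kappa_scale)
  finally show ?thesis by blast
qed



definition cmp :: "('a::real_normed_vector \<Rightarrow> ('a \<Rightarrow>\<^sub>L 'a)) \<Rightarrow> 'a bidual \<Rightarrow> ('a \<Rightarrow>\<^sub>L real) \<Rightarrow> ('a \<Rightarrow>\<^sub>L real)" where
  "cmp M \<Phi> f = Blinfun (\<lambda>a. blinfun_apply \<Phi> (f o\<^sub>L M a))"

lemma bl_comp_left: "bounded_linear (\<lambda>f::'b::real_normed_vector \<Rightarrow>\<^sub>L 'c::real_normed_vector. f o\<^sub>L X)"
  by (rule bounded_bilinear.bounded_linear_left[OF bounded_bilinear_blinfun_compose])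
lemma bl_comp_right: "bounded_linear (\<lambda>X. (f::'b::real_normed_vector \<Rightarrow>\<^sub>L 'c::real_normed_vector) o\<^sub>L X)"
  by (rule bounded_bilinear.bounded_linear_right[OF bounded_bilinear_blinfun_compose])

lemma cmp_apply:
  assumes "bounded_linear M"
  shows "blinfun_apply (cmp M \<Phi> f) a = blinfun_apply \<Phi> (f o\<^sub>L M a)"
proof -
  have "bounded_linear (\<lambda>a. blinfun_apply \<Phi> (f o\<^sub>L M a))"
    by (rule bounded_linear_blinfun_apply[OF bounded_linear_compose[OF bl_comp_right assms]])
  then show ?thesis unfolding cmp_def by (simp add: bounded_linear_Blinfun_apply)
qed

lemma cmp_bl:
  assumes M: "bounded_linear M" and nM: "\<And>a. norm (M a) \<le> norm a"
  shows "bounded_linear (\<lambda>f. cmp M \<Phi> f)"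
proof (rule bounded_linear_intro[where K = "norm \<Phi>"])
  fix f1 f2 show "cmp M \<Phi> (f1 + f2) = cmp M \<Phi> f1 + cmp M \<Phi> f2"
    by (rule blinfun_eqI) (simp add: cmp_apply[OF M] blinfun.add_left blinfun.add_right
        bounded_bilinear.add_left[OF bounded_bilinear_blinfun_compose])
next
  fix r f show "cmp M \<Phi> (r *\<^sub>R f) = r *\<^sub>R cmp M \<Phi> f"
    by (rule blinfun_eqI) (simp add: cmp_apply[OF M] blinfun.scaleR_left blinfun.scaleR_right
        bounded_bilinear.scaleR_left[OF bounded_bilinear_blinfun_compose])
next
  fix f show "norm (cmp M \<Phi> f) \<le> norm f * norm \<Phi>"
  proof (rule norm_blinfun_bound)
    show "0 \<le> norm f * norm \<Phi>" by simp
    fix a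
    have "norm (blinfun_apply (cmp M \<Phi> f) a) \<le> norm \<Phi> * norm (f o\<^sub>L M a)"
      unfolding cmp_apply[OF M] by (rule norm_blinfun)
    also have "\<dots> \<le> norm \<Phi> * (norm f * norm (M a))"
      by (intro mult_left_mono norm_blinfun_compose) simp
    also have "\<dots> \<le> norm \<Phi> * (norm f * norm a)"
      by (intro mult_left_mono nM) simp_all
    finally show "norm (blinfun_apply (cmp M \<Phi> f) a) \<le> norm f * norm \<Phi> * norm a" by (simp add: algebra_simps)
  qed
qed

lemma norm_mult_right_le: "norm (blinfun_mult_right (a::'a::real_normed_algebra)) \<le> norm a"
  by (rule norm_blinfun_bound) (simp_all add: norm_mult_ineq)
lemma norm_mult_left_le: "norm (blinfun_mult_left (a::'a::real_normed_algebra)) \<le> norm a"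
  by (rule norm_blinfun_bound) (simp_all add: norm_mult_ineq mult.commute)

lemma bl_outer:
  fixes \<Psi> :: "'a::real_normed_algebra bidual"
  assumes M: "bounded_linear M" and nM: "\<And>a. norm (M a) \<le> norm a"
  shows "blinfun_apply (Blinfun (\<lambda>f. blinfun_apply \<Psi> (cmp M \<Phi> f))) f = blinfun_apply \<Psi> (cmp M \<Phi> f)"
  by (simp add: bounded_linear_Blinfun_apply bounded_linear_blinfun_apply[OF cmp_bl[OF M nM]])

lemma bl_TA:
  "blinfun_apply (Blinfun (\<lambda>f. blinfun_apply T (f o\<^sub>L X))) f = blinfun_apply T (f o\<^sub>L X)"
  by (simp add: bounded_linear_Blinfun_apply bounded_linear_blinfun_apply[OF bl_comp_left])

lemma arens_left_eq:
  fixes S T :: "'a::{real_normed_algebra} bidual"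
  shows "arens_left S T = Blinfun (\<lambda>f. blinfun_apply S (cmp blinfun_mult_right T f))"
    (is "_ = ?R")
proof -
  have P: "limitin wstar_top (\<lambda>a. wlim G (\<lambda>b. kappa (a * b))) ?R F"
    if F: "bnd_net F S" and G: "bnd_net G T" for F G
  proof -
    define TA where "TA a = Blinfun (\<lambda>f. blinfun_apply T (f o\<^sub>L blinfun_mult_right a))" for a
    have Gb: "G \<noteq> bot" and GT: "limitin wstar_top kappa T G" using G unfolding bnd_net_def by auto
    have FS: "limitin wstar_top kappa S F" using F unfolding bnd_net_def by auto
    have inner: "wlim G (\<lambda>b. kappa (a * b)) = TA a" for a
    proof (rule wlim_eq[OF _ Gb])
      show "limitin wstar_top (\<lambda>b. kappa (a * b)) (TA a) G"
        unfolding wstar_limitin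
      proof
        fix f :: "'a \<Rightarrow>\<^sub>L real"
        have "((\<lambda>b. blinfun_apply (kappa b) (f o\<^sub>L blinfun_mult_right a)) \<longlongrightarrow>
                 blinfun_apply T (f o\<^sub>L blinfun_mult_right a)) G"
          using GT unfolding wstar_limitin by blast
        then show "((\<lambda>b. blinfun_apply (kappa (a * b)) f) \<longlongrightarrow> blinfun_apply (TA a) f) G"
          by (simp add: TA_def bl_TA)
      qed
    qed
    show ?thesis unfolding inner wstar_limitin
    proof
      fix f :: "'a \<Rightarrow>\<^sub>L real"
      have "((\<lambda>a. blinfun_apply (kappa a) (cmp blinfun_mult_right T f)) \<longlongrightarrow>
               blinfun_apply S (cmp blinfun_mult_right T f)) F"
        using FS unfolding wstar_limitin by blast
      then show "((\<lambda>a. blinfun_apply (TA a) f) \<longlongrightarrow> blinfun_apply ?R f) F"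
        by (simp add: TA_def bl_TA bl_outer[OF bounded_linear_blinfun_mult_right norm_mult_right_le]
            cmp_apply[OF bounded_linear_blinfun_mult_right])
    qed
  qed
  show ?thesis unfolding arens_left_def
  proof (rule the_equality)
    show "\<forall>F G. bnd_net F S \<and> bnd_net G T \<longrightarrow> limitin wstar_top (\<lambda>a. wlim G (\<lambda>b. kappa (a * b))) ?R F"
      using P by blast
    fix R assume R: "\<forall>F G. bnd_net F S \<and> bnd_net G T \<longrightarrow> limitin wstar_top (\<lambda>a. wlim G (\<lambda>b. kappa (a * b))) R F"
    obtain F where F: "bnd_net F S" using goldstine by blast
    obtain G where G: "bnd_net G T" using goldstine by blast
    have "F \<noteq> bot" using F unfolding bnd_net_def by auto
    then show "R = ?R" using limitin_Hausdorff_unique[OF _ P[OF F G] _ wstar_Hausdorff] R F G by blast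
  qed
qed

lemma arens_right_eq:
  fixes S T :: "'a::{real_normed_algebra} bidual"
  shows "arens_right S T = Blinfun (\<lambda>f. blinfun_apply T (cmp blinfun_mult_left S f))"
    (is "_ = ?R")
proof -
  have P: "limitin wstar_top (\<lambda>b. wlim F (\<lambda>a. kappa (a * b))) ?R G"
    if F: "bnd_net F S" and G: "bnd_net G T" for F G
  proof -
    define SB where "SB b = Blinfun (\<lambda>f. blinfun_apply S (f o\<^sub>L blinfun_mult_left b))" for b
    have Fb: "F \<noteq> bot" and FS: "limitin wstar_top kappa S F" using F unfolding bnd_net_def by auto
    have GT: "limitin wstar_top kappa T G" using G unfolding bnd_net_def by auto
    have inner: "wlim F (\<lambda>a. kappa (a * b)) = SB b" for b
    proof (rule wlim_eq[OF _ Fb])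
      show "limitin wstar_top (\<lambda>a. kappa (a * b)) (SB b) F"
        unfolding wstar_limitin
      proof
        fix f :: "'a \<Rightarrow>\<^sub>L real"
        have "((\<lambda>a. blinfun_apply (kappa a) (f o\<^sub>L blinfun_mult_left b)) \<longlongrightarrow>
                 blinfun_apply S (f o\<^sub>L blinfun_mult_left b)) F"
          using FS unfolding wstar_limitin by blast
        then show "((\<lambda>a. blinfun_apply (kappa (a * b)) f) \<longlongrightarrow> blinfun_apply (SB b) f) F"
          by (simp add: SB_def bl_TA)
      qed
    qed
    show ?thesis unfolding inner wstar_limitin
    proof
      fix f :: "'a \<Rightarrow>\<^sub>L real"
      have "((\<lambda>b. blinfun_apply (kappa b) (cmp blinfun_mult_left S f)) \<longlongrightarrow>
               blinfun_apply T (cmp blinfun_mult_left S f)) G"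
        using GT unfolding wstar_limitin by blast
      then show "((\<lambda>b. blinfun_apply (SB b) f) \<longlongrightarrow> blinfun_apply ?R f) G"
        by (simp add: SB_def bl_TA bl_outer[OF bounded_linear_blinfun_mult_left norm_mult_left_le]
            cmp_apply[OF bounded_linear_blinfun_mult_left])
    qed
  qed
  show ?thesis unfolding arens_right_def
  proof (rule the_equality)
    show "\<forall>F G. bnd_net F S \<and> bnd_net G T \<longrightarrow> limitin wstar_top (\<lambda>b. wlim F (\<lambda>a. kappa (a * b))) ?R G"
      using P by blast
    fix R assume R: "\<forall>F G. bnd_net F S \<and> bnd_net G T \<longrightarrow> limitin wstar_top (\<lambda>b. wlim F (\<lambda>a. kappa (a * b))) R G"
    obtain F where F: "bnd_net F S" using goldstine by blast
    obtain G where G: "bnd_net G T" using goldstine by blast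
    have "G \<noteq> bot" using G unfolding bnd_net_def by auto
    then show "R = ?R" using limitin_Hausdorff_unique[OF _ P[OF F G] _ wstar_Hausdorff] R F G by blast
  qed
qed



lemma phitilde_apply:
  "blinfun_apply (phitilde \<phi> S x) g = blinfun_apply S (g o\<^sub>L (ev x o\<^sub>L \<phi>))"
  by (simp add: phitilde_eq)

lemma gamma_apply: "blinfun_apply (gamma c x) g = blinfun_apply g (blinfun_apply c x)"
  by (simp add: gamma_def)

lemma phitilde_kappa: "phitilde \<phi> (kappa a) = gamma (blinfun_apply \<phi> a)"
  by (rule ext, rule blinfun_eqI) (simp add: phitilde_apply gamma_apply)

lemma kernel_subspace: "subspace {z. blinfun_apply (f::'x::real_normed_vector \<Rightarrow>\<^sub>L real) z = 0}"
  unfolding subspace_def by (simp add: blinfun.add_right blinfun.scaleR_right)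

lemma norm_ev_le: "norm (ev (x::'x::real_normed_vector)) \<le> norm x"
  apply (rule norm_blinfun_bound)
   apply simp
  subgoal for a using norm_blinfun[of a x] by (simp add: mult.commute)
  done

lemma norm_biadj_le: "norm (blinfun_apply (biadj T) S) \<le> norm S * norm T"
proof (rule norm_blinfun_bound)
  show "0 \<le> norm S * norm T" by simp
  fix g
  have "norm (blinfun_apply S (g o\<^sub>L T)) \<le> norm S * norm (g o\<^sub>L T)" by (rule norm_blinfun)
  also have "\<dots> \<le> norm S * (norm g * norm T)" by (intro mult_left_mono norm_blinfun_compose) simp
  finally show "norm (blinfun_apply (blinfun_apply (biadj T) S) g) \<le> norm S * norm T * norm g"
    by (simp add: algebra_simps)
qed

lemma to_gamma:
  fixes \<phi> :: "'a::real_normed_vector \<Rightarrow>\<^sub>L ('x::real_normed_vector \<Rightarrow>\<^sub>L 'x)"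
  assumes H: "\<And>x. \<exists>y. phitilde \<phi> S x = kappa y"
  shows "\<exists>c. phitilde \<phi> S = gamma c"
proof -
  define cf where "cf x = (SOME y. phitilde \<phi> S x = kappa y)" for x
  have cf: "kappa (cf x) = phitilde \<phi> S x" for x unfolding cf_def by (rule someI_ex[OF H, THEN sym])
  have add: "phitilde \<phi> S (x1 + x2) = phitilde \<phi> S x1 + phitilde \<phi> S x2" for x1 x2
  proof (rule blinfun_eqI)
    fix g :: "'x \<Rightarrow>\<^sub>L real"
    have "g o\<^sub>L (ev (x1 + x2) o\<^sub>L \<phi>) = (g o\<^sub>L (ev x1 o\<^sub>L \<phi>)) + (g o\<^sub>L (ev x2 o\<^sub>L \<phi>))"
      by (rule blinfun_eqI) (simp add: blinfun.add_left blinfun.add_right)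
    then show "blinfun_apply (phitilde \<phi> S (x1 + x2)) g = blinfun_apply (phitilde \<phi> S x1 + phitilde \<phi> S x2) g"
      by (simp add: phitilde_apply blinfun.add_left blinfun.add_right)
  qed
  have scl: "phitilde \<phi> S (r *\<^sub>R x) = r *\<^sub>R phitilde \<phi> S x" for r x
  proof (rule blinfun_eqI)
    fix g :: "'x \<Rightarrow>\<^sub>L real"
    have "g o\<^sub>L (ev (r *\<^sub>R x) o\<^sub>L \<phi>) = r *\<^sub>R (g o\<^sub>L (ev x o\<^sub>L \<phi>))"
      by (rule blinfun_eqI) (simp add: blinfun.scaleR_left blinfun.scaleR_right)
    then show "blinfun_apply (phitilde \<phi> S (r *\<^sub>R x)) g = blinfun_apply (r *\<^sub>R phitilde \<phi> S x) g"
      by (simp add: phitilde_apply blinfun.scaleR_left blinfun.scaleR_right)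
  qed
  have bl: "bounded_linear cf"
  proof (rule bounded_linear_intro[where K = "norm S * norm \<phi>"])
    fix x1 x2 show "cf (x1 + x2) = cf x1 + cf x2"
      by (rule kappa_inj) (simp add: cf add kappa_add)
  next
    fix r x show "cf (r *\<^sub>R x) = r *\<^sub>R cf x"
      by (rule kappa_inj) (simp add: cf scl kappa_scale)
  next
    fix x
    have "norm (cf x) = norm (phitilde \<phi> S x)" by (metis cf norm_kappa)
    also have "\<dots> \<le> norm S * norm (ev x o\<^sub>L \<phi>)" unfolding phitilde_eq by (rule norm_biadj_le)
    also have "\<dots> \<le> norm S * (norm x * norm \<phi>)"
    proof (intro mult_left_mono)
      have "norm (ev x o\<^sub>L \<phi>) \<le> norm (ev x) * norm \<phi>" by (rule norm_blinfun_compose)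
      also have "\<dots> \<le> norm x * norm \<phi>" by (intro mult_right_mono norm_ev_le) simp
      finally show "norm (ev x o\<^sub>L \<phi>) \<le> norm x * norm \<phi>" .
    qed simp
    finally show "norm (cf x) \<le> norm x * (norm S * norm \<phi>)" by (simp add: algebra_simps)
  qed
  have "phitilde \<phi> S = gamma (Blinfun cf)"
    by (rule ext) (simp add: gamma_def bounded_linear_Blinfun_apply[OF bl] cf)
  then show ?thesis by blast
qed

theorem theorem2p5:
  fixes \<phi> :: "'a::{banach, real_normed_algebra} \<Rightarrow>\<^sub>L ('x::banach \<Rightarrow>\<^sub>L 'x)"
  assumes mult: "\<And>a b. \<phi> (a * b) = \<phi> a o\<^sub>L \<phi> b"
  shows "((\<forall>S. \<exists>c. phitilde \<phi> S = gamma c) \<longleftrightarrow> (\<forall>x. weakly_compact (ev x o\<^sub>L \<phi>)))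
    \<and> ((\<forall>S. \<exists>c. phitilde \<phi> S = gamma c) \<longrightarrow>
         ess_space (blinfun_apply \<phi>) = ess_space (phihat \<phi>)
       \<and> (\<forall>S T. phihat \<phi> (arens_left S T) = phihat \<phi> S o\<^sub>L phihat \<phi> T)
       \<and> (\<forall>S T. phihat \<phi> (arens_right S T) = phihat \<phi> S o\<^sub>L phihat \<phi> T)
       \<and> (\<forall>a. phihat \<phi> (kappa a) = \<phi> a))"
proof (intro conjI impI)
  show "(\<forall>S. \<exists>c. phitilde \<phi> S = gamma c) \<longleftrightarrow> (\<forall>x. weakly_compact (ev x o\<^sub>L \<phi>))"
  proof
    assume H: "\<forall>S. \<exists>c. phitilde \<phi> S = gamma c"
    show "\<forall>x. weakly_compact (ev x o\<^sub>L \<phi>)"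
    proof
      fix x show "weakly_compact (ev x o\<^sub>L \<phi>)"
      proof (rule gantmacher1)
        fix S
        obtain c where c: "phitilde \<phi> S = gamma c" using H by blast
        have "phitilde \<phi> S x = kappa (blinfun_apply c x)" using c by (simp add: gamma_def)
        then have "blinfun_apply (biadj (ev x o\<^sub>L \<phi>)) S = kappa (blinfun_apply c x)"
          using phitilde_eq[of \<phi> S x] by simp
        then show "\<exists>y. blinfun_apply (biadj (ev x o\<^sub>L \<phi>)) S = kappa y" by blast
      qed
    qed
  next
    assume W: "\<forall>x. weakly_compact (ev x o\<^sub>L \<phi>)"
    show "\<forall>S. \<exists>c. phitilde \<phi> S = gamma c"
    proof
      fix S show "\<exists>c. phitilde \<phi> S = gamma c"
        by (rule to_gamma) (simp add: phitilde_eq gantmacher2 W)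
    qed
  qed
next
  show "\<forall>a. phihat \<phi> (kappa a) = \<phi> a" by (simp add: phihat_eq phitilde_kappa)
next
  assume H: "\<forall>S. \<exists>c. phitilde \<phi> S = gamma c"
  define C where "C S = phihat \<phi> S" for S
  have CS: "phitilde \<phi> S = gamma (C S)" for S
  proof -
    obtain c where c: "phitilde \<phi> S = gamma c" using H by blast
    then show ?thesis unfolding C_def using phihat_eq[OF c] by simp
  qed
  have key: "blinfun_apply S (g o\<^sub>L (ev x o\<^sub>L \<phi>)) = blinfun_apply g (blinfun_apply (C S) x)" for S x g
    using arg_cong[OF CS[of S], of "\<lambda>F. blinfun_apply (F x) g"] by (simp add: phitilde_apply gamma_apply)
  show "\<forall>S T. phihat \<phi> (arens_left S T) = phihat \<phi> S o\<^sub>L phihat \<phi> T"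
  proof (intro allI)
    fix S T
    have "phitilde \<phi> (arens_left S T) = gamma (C S o\<^sub>L C T)"
    proof (rule ext, rule blinfun_eqI)
      fix x and g :: "'x \<Rightarrow>\<^sub>L real"
      define h where "h = g o\<^sub>L (ev x o\<^sub>L \<phi>)"
      have "cmp blinfun_mult_right T h = g o\<^sub>L (ev (blinfun_apply (C T) x) o\<^sub>L \<phi>)"
      proof (rule blinfun_eqI)
        fix a
        have "h o\<^sub>L blinfun_mult_right a = (g o\<^sub>L \<phi> a) o\<^sub>L (ev x o\<^sub>L \<phi>)"
          by (rule blinfun_eqI) (simp add: h_def mult)
        then show "blinfun_apply (cmp blinfun_mult_right T h) a = blinfun_apply (g o\<^sub>L (ev (blinfun_apply (C T) x) o\<^sub>L \<phi>)) a"
          by (simp add: cmp_apply[OF bounded_linear_blinfun_mult_right] key)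
      qed
      then show "blinfun_apply (phitilde \<phi> (arens_left S T) x) g = blinfun_apply (gamma (C S o\<^sub>L C T) x) g"
        by (simp add: phitilde_apply gamma_apply arens_left_eq
            bl_outer[OF bounded_linear_blinfun_mult_right norm_mult_right_le] key flip: h_def)
    qed
    then show "phihat \<phi> (arens_left S T) = phihat \<phi> S o\<^sub>L phihat \<phi> T"
      by (simp add: phihat_eq C_def)
  qed
  show "\<forall>S T. phihat \<phi> (arens_right S T) = phihat \<phi> S o\<^sub>L phihat \<phi> T"
  proof (intro allI)
    fix S T
    have "phitilde \<phi> (arens_right S T) = gamma (C S o\<^sub>L C T)"
    proof (rule ext, rule blinfun_eqI)
      fix x and g :: "'x \<Rightarrow>\<^sub>L real"
      define h where "h = g o\<^sub>L (ev x o\<^sub>L \<phi>)"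
      have "cmp blinfun_mult_left S h = (g o\<^sub>L C S) o\<^sub>L (ev x o\<^sub>L \<phi>)"
      proof (rule blinfun_eqI)
        fix b
        have "h o\<^sub>L blinfun_mult_left b = g o\<^sub>L (ev (blinfun_apply (\<phi> b) x) o\<^sub>L \<phi>)"
          by (rule blinfun_eqI) (simp add: h_def mult)
        then show "blinfun_apply (cmp blinfun_mult_left S h) b = blinfun_apply ((g o\<^sub>L C S) o\<^sub>L (ev x o\<^sub>L \<phi>)) b"
          by (simp add: cmp_apply[OF bounded_linear_blinfun_mult_left] key)
      qed
      then show "blinfun_apply (phitilde \<phi> (arens_right S T) x) g = blinfun_apply (gamma (C S o\<^sub>L C T) x) g"
        by (simp add: phitilde_apply gamma_apply arens_right_eq
            bl_outer[OF bounded_linear_blinfun_mult_left norm_mult_left_le] key flip: h_def)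
    qed
    then show "phihat \<phi> (arens_right S T) = phihat \<phi> S o\<^sub>L phihat \<phi> T"
      by (simp add: phihat_eq C_def)
  qed
  show "ess_space (blinfun_apply \<phi>) = ess_space (phihat \<phi>)"
  proof
    show "ess_space (blinfun_apply \<phi>) \<subseteq> ess_space (phihat \<phi>)"
      unfolding ess_space_def
    proof (intro closure_mono span_mono)
      show "{blinfun_apply (blinfun_apply \<phi> b) x |b x. True} \<subseteq> {blinfun_apply (phihat \<phi> b) x |b x. True}"
      proof
        fix y assume "y \<in> {blinfun_apply (blinfun_apply \<phi> b) x |b x. True}"
        then obtain b x where y: "y = blinfun_apply (blinfun_apply \<phi> b) x" by blast
        have "y = blinfun_apply (phihat \<phi> (kappa b)) x" using y phihat_eq[OF phitilde_kappa[of \<phi> b]] by simp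
        then show "y \<in> {blinfun_apply (phihat \<phi> b) x |b x. True}" by blast
      qed
    qed
  next
    define A where "A = {blinfun_apply (blinfun_apply \<phi> b) x |b x. True}"
    define B where "B = {blinfun_apply (phihat \<phi> S) x |S x. True}"
    have ne: "span A \<noteq> {}" using span_0 by blast
    have "span B \<subseteq> closure (span A)"
    proof
      fix z assume z: "z \<in> span B"
      show "z \<in> closure (span A)"
      proof (rule ccontr)
        assume nz: "z \<notin> closure (span A)"
        obtain f :: "'x \<Rightarrow>\<^sub>L real" where f: "\<forall>m\<in>span A. blinfun_apply f m = 0"
          "blinfun_apply f z = infdist z (span A)"
          using hb_sub[OF subspace_span] by blast
        have "infdist z (span A) \<noteq> 0" using nz in_closure_iff_infdist_zero[OF ne] by blast
        then have fz: "blinfun_apply f z \<noteq> 0" using f(2) by simp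
        have "B \<subseteq> {z. blinfun_apply f z = 0}"
        proof
          fix y assume "y \<in> B"
          then obtain S x where y: "y = blinfun_apply (phihat \<phi> S) x" unfolding B_def by blast
          have "f o\<^sub>L (ev x o\<^sub>L \<phi>) = 0"
          proof (rule blinfun_eqI)
            fix a
            have "blinfun_apply (\<phi> a) x \<in> span A" unfolding A_def by (rule span_base) blast
            then show "blinfun_apply (f o\<^sub>L (ev x o\<^sub>L \<phi>)) a = blinfun_apply 0 a" using f(1) by simp
          qed
          then have "blinfun_apply f y = 0" using key[of S f x] by (simp add: y C_def)
          then show "y \<in> {z. blinfun_apply f z = 0}" by simp
        qed
        then have "span B \<subseteq> {z. blinfun_apply f z = 0}" by (rule span_minimal[OF _ kernel_subspace])
        then show False using z fz by blast
      qed
    qed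
    then have "closure (span B) \<subseteq> closure (span A)" using closure_minimal by blast
    then show "ess_space (phihat \<phi>) \<subseteq> ess_space (blinfun_apply \<phi>)"
      unfolding ess_space_def A_def B_def by simp
  qed
qed

end
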